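(* Let $\mathcal G=(N,\Sigma,S,P)$ be a normalized spine grammar with spine direction $d$, and let $L_1=\{w\in\mathrm{Next}(\mathcal S(\mathcal G))\mid |w|=1\}$. Then there exists a pop-normalized MPDA $\mathcal A$ with $L(\mathcal A)\cup L_1=\mathrm{Next}(\mathcal S(\mathcal G))$. Moreover, the tree languages $\mathcal F(L(\mathcal A)\cup L_1)_S$ and $T(\mathcal G)$ coincide modulo relabeling, i.e. there is a relabeling $\rho$ with $\rho(\mathcal F(L(\mathcal A)\cup L_1)_S)=T(\mathcal G)$.
   Context: Spine grammar / normalized: $\mathcal G=(N,\Sigma,S,P)$ with $N=N_0\cup N_1$ (nullary/unary nonterminals), terminals $\Sigma=\Sigma_0\cup\Sigma_2$, start $S\in N_0$, productions of the forms $n\to\alpha$, $n\to b(\alpha)$ ($n\in N_0$, $b\in N_1$, $\alpha\in\Sigma_0$), $n\to b_1(b_2(\Box))$ ($b_i\in N_1$), $n\to\sigma(\Box,a)$, $n\to\sigma(a,\Box)$ ($\sigma\in\Sigma_2$, $a\in N_0\setminus\{S\}$), with a spine direction $d:\Sigma_2\to\{1,2\}$ such that in each production $n\to\sigma(\cdot,\cdot)$ containing $\Box$ the hole is in child $d(\sigma)$, and such that for each $n\in N_0$ no tree derivable from $n$ by one step followed by steps with only unary-nonterminal productions contains $n$. A step replaces a nullary nonterminal by a right-hand side, or a subtree $n(t')$ with $n\in N_1$ by the right-hand side with $\Box$ replaced by $t'$; $T(\mathcal G)$ is the set of terminal trees derivable from $S$. $\mathcal S(\mathcal G)$ is the language of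 the CFG with start $\top$, nonterminals $\{\top\}\cup N^2$ (write $n_g=(n,g)$), terminals $\alpha_n=(\alpha,n)$ and $\frac{\sigma}{n_1\ n_2}=(\sigma,n_1,n_2)$, and productions $\top\to\alpha_n$ for $(n\to\alpha)\in P$, $\top\to\alpha_nb_n$ for $(n\to b(\alpha))\in P$, and for all $g\in N$: $n_g\to b'_gb_g$ for $(n\to b(b'(\Box)))\in P$, $n_g\to\frac{\sigma}{g\ n'}$ for $(n\to\sigma(\Box,n'))\in P$, $n_g\to\frac{\sigma}{n'\ g}$ for $(n\to\sigma(n',\Box))\in P$. For an alphabet $\Theta$ and $\triangleleft\notin\Theta$, $\mathrm{Next}(L)=\bigcup_n\{\langle\theta_2,\theta_1\rangle\cdots\langle\theta_n,\theta_{n-1}\rangle\langle\triangleleft,\theta_n\rangle\mid\theta_1\cdots\theta_n\in L\}$. A letter $(s',\alpha_n)$ of $\mathrm{Next}(\mathcal S(\mathcal G))$ is regarded as the leaf symbol $((s',\alpha),n)$ and a letter $(s',\frac{\sigma}{n_1\ n_2})$ as the binary symbol $((s',\sigma),n_1,n_2)$ with direction $d((s',\sigma))=d(\sigma)$. For such annotated symbols define $\mathrm{gen}$ of a leaf symbol with annotation $n$ as $n$ and of a binary symbol annotated $(n_1,n_2)$ with underlying $\sigma$ as $n_{d(\sigma)}$; for a tree set $T$, $T_n$ is the set of trees whose root symbol has $\mathrm{gen}=n$; $\mathrm{attach}_T$ of a one-letter word is the leaf itself, and $\mathrm{attach}_T(w\,x)$ for a binary symbol $x$ annotated $(n_1,n_2)$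 with direction $k$ is the set of trees $x(t_1,t_2)$ with $t_k\in\mathrm{attach}_T(w)$ and $t_{3-k}\in T_{n_{3-k}}$; $\mathcal F(L)$ is the smallest $\mathcal F$ with $\mathrm{attach}_{\mathcal F}(w)\subseteq\mathcal F$ for all $w\in L$, and $\mathcal F(L)_S$ its trees whose root has $\mathrm{gen}=S$. MPDA $\mathcal A=(Q,\Delta,\Gamma,\delta,\tau,I,F)$: states $Q$, input symbols $\Delta$, stack symbols $\Gamma$, transitions $\delta\subseteq(Q\times\Gamma^{\le1}\times\Gamma^{\le1}\times Q)\setminus(Q\times\Gamma\times\Gamma\times Q)$, output $\tau:Q\to\Delta$, $I,F\subseteq Q$; moves $\langle q,\gamma\alpha\rangle\vdash\langle q',\gamma'\alpha\rangle$ for $(q,\gamma,\gamma',q')\in\delta$ if $\gamma\alpha\neq\varepsilon$; accepting runs start in $\langle q,\gamma\rangle$ with $q\in I$, $\gamma\in\Gamma$, and end in $\langle q,\varepsilon\rangle$ with $q\in F$; $L(\mathcal A)$ is the set of output strings $\tau(q_0)\cdots\tau(q_n)$ of accepting runs. Pop-normalized: some $\mathrm{return}:\Gamma\to Q$ satisfies $q'=\mathrm{return}(\gamma)$ for all $(q,\gamma,\varepsilon,q')\in\delta$, $\gamma\in\Gamma$. *)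

theory Defs
  imports Main
begin

datatype ('l, 'b) btree = Leaf 'l | Node 'b "('l, 'b) btree" "('l, 'b) btree"

text \<open>Sentential forms / right-hand sides of a spine grammar: the hole, nullary nonterminals,
  unary nonterminals, nullary terminals, binary terminals.\<close>
datatype ('n, 'a, 's) sf =
    SHole
  | SNt0 'n
  | SNt1 'n "('n, 'a, 's) sf"
  | SLeaf 'a
  | SBin 's "('n, 'a, 's) sf" "('n, 'a, 's) sf"

fun of_tree :: "('a, 's) btree \<Rightarrow> ('n, 'a, 's) sf" where
  "of_tree (Leaf a) = SLeaf a"
| "of_tree (Node s l r) = SBin s (of_tree l) (of_tree r)"

fun subst_hole :: "('n, 'a, 's) sf \<Rightarrow> ('n, 'a, 's) sf \<Rightarrow> ('n, 'a, 's) sf" where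
  "subst_hole SHole t = t"
| "subst_hole (SNt0 n) t = SNt0 n"
| "subst_hole (SNt1 b u) t = SNt1 b (subst_hole u t)"
| "subst_hole (SLeaf a) t = SLeaf a"
| "subst_hole (SBin s l r) t = SBin s (subst_hole l t) (subst_hole r t)"

fun sf_nts :: "('n, 'a, 's) sf \<Rightarrow> 'n set" where
  "sf_nts SHole = {}"
| "sf_nts (SNt0 n) = {n}"
| "sf_nts (SNt1 b u) = insert b (sf_nts u)"
| "sf_nts (SLeaf a) = {}"
| "sf_nts (SBin s l r) = sf_nts l \<union> sf_nts r"

record ('n, 'a, 's) spine_grammar =
  nts0 :: "'n set"
  nts1 :: "'n set"
  term0 :: "'a set"
  term2 :: "'s set"
  start :: 'n
  prods :: "('n \<times> ('n, 'a, 's) sf) set"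

inductive gstep :: "'n set \<Rightarrow> 'n set \<Rightarrow> ('n \<times> ('n, 'a, 's) sf) set
    \<Rightarrow> ('n, 'a, 's) sf \<Rightarrow> ('n, 'a, 's) sf \<Rightarrow> bool"
  for N0 N1 P where
  nullary: "(n, r) \<in> P \<Longrightarrow> n \<in> N0 \<Longrightarrow> gstep N0 N1 P (SNt0 n) r"
| unary: "(n, r) \<in> P \<Longrightarrow> n \<in> N1 \<Longrightarrow> gstep N0 N1 P (SNt1 n t) (subst_hole r t)"
| cong1: "gstep N0 N1 P t t' \<Longrightarrow> gstep N0 N1 P (SNt1 b t) (SNt1 b t')"
| congl: "gstep N0 N1 P l l' \<Longrightarrow> gstep N0 N1 P (SBin s l r) (SBin s l' r)"
| congr: "gstep N0 N1 P r r' \<Longrightarrow> gstep N0 N1 P (SBin s l r) (SBin s l r')"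

definition grammar_step :: "('n, 'a, 's) spine_grammar \<Rightarrow> ('n, 'a, 's) sf \<Rightarrow> ('n, 'a, 's) sf \<Rightarrow> bool" where
  "grammar_step G = gstep (nts0 G) (nts1 G) (prods G)"

definition unary_step :: "('n, 'a, 's) spine_grammar \<Rightarrow> ('n, 'a, 's) sf \<Rightarrow> ('n, 'a, 's) sf \<Rightarrow> bool" where
  "unary_step G = gstep (nts0 G) (nts1 G) {(n, r) \<in> prods G. n \<in> nts1 G}"

definition tree_lang :: "('n, 'a, 's) spine_grammar \<Rightarrow> ('a, 's) btree set" where
  "tree_lang G = {t. (grammar_step G)\<^sup>*\<^sup>* (SNt0 (start G)) (of_tree t)}"

definition normalized_spine :: "('n, 'a, 's) spine_grammar \<Rightarrow> ('s \<Rightarrow> nat) \<Rightarrow> bool" where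
  "normalized_spine G d \<longleftrightarrow>
     finite (nts0 G) \<and> finite (nts1 G) \<and> nts0 G \<inter> nts1 G = {} \<and>
     finite (term0 G) \<and> finite (term2 G) \<and> finite (prods G) \<and>
     start G \<in> nts0 G \<and>
     (\<forall>s \<in> term2 G. d s \<in> {1, 2}) \<and>
     (\<forall>(n, r) \<in> prods G.
        (n \<in> nts0 G \<and> (\<exists>a \<in> term0 G. r = SLeaf a))
      \<or> (n \<in> nts0 G \<and> (\<exists>b \<in> nts1 G. \<exists>a \<in> term0 G. r = SNt1 b (SLeaf a)))
      \<or> (n \<in> nts1 G \<and> (\<exists>b1 \<in> nts1 G. \<exists>b2 \<in> nts1 G. r = SNt1 b1 (SNt1 b2 SHole)))
      \<or> (n \<in> nts1 G \<and> (\<exists>s \<in> term2 G. \<exists>a \<in> nts0 G - {start G}.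
            r = SBin s SHole (SNt0 a) \<and> d s = 1))
      \<or> (n \<in> nts1 G \<and> (\<exists>s \<in> term2 G. \<exists>a \<in> nts0 G - {start G}.
            r = SBin s (SNt0 a) SHole \<and> d s = 2))) \<and>
     (\<forall>n \<in> nts0 G. \<forall>t t'. grammar_step G (SNt0 n) t \<longrightarrow> (unary_step G)\<^sup>*\<^sup>* t t'
        \<longrightarrow> n \<notin> sf_nts t')"

text \<open>A CFG is given by its productions (nonterminal, right-hand side over nonterminals (Inl)
  and terminals (Inr)); its language is the set of terminal words derivable from the start.\<close>
definition cfg_step :: "('N \<times> ('N + 'T) list) set \<Rightarrow> ('N + 'T) list \<Rightarrow> ('N + 'T) list \<Rightarrow> bool" where
  "cfg_step Pr u v \<longleftrightarrow> (\<exists>x y A rhs. (A, rhs) \<in> Pr \<and> u = x @ [Inl A] @ y \<and> v = x @ rhs @ y)"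

definition cfg_lang :: "('N \<times> ('N + 'T) list) set \<Rightarrow> 'N \<Rightarrow> 'T list set" where
  "cfg_lang Pr S = {w. (cfg_step Pr)\<^sup>*\<^sup>* [Inl S] (map Inr w)}"

text \<open>Terminals of S(G): alpha_n = SymA alpha n, and (sigma over n1 n2) = SymB sigma n1 n2.\<close>
datatype ('n, 'a, 's) sym = SymA 'a 'n | SymB 's 'n 'n

text \<open>Nonterminals of S(G): None is the start symbol top, Some (n, g) is n_g.\<close>
definition spine_prods :: "('n, 'a, 's) spine_grammar
    \<Rightarrow> (('n \<times> 'n) option \<times> (('n \<times> 'n) option + ('n, 'a, 's) sym) list) set" where
  "spine_prods G =
     {(None, [Inr (SymA a n)]) | n a. (n, SLeaf a) \<in> prods G}
   \<union> {(None, [Inr (SymA a n), Inl (Some (b, n))]) | n b a. (n, SNt1 b (SLeaf a)) \<in> prods G}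
   \<union> {(Some (n, g), [Inl (Some (b', g)), Inl (Some (b, g))]) | n b b' g.
        (n, SNt1 b (SNt1 b' SHole)) \<in> prods G \<and> g \<in> nts0 G \<union> nts1 G}
   \<union> {(Some (n, g), [Inr (SymB s g n')]) | n s n' g.
        (n, SBin s SHole (SNt0 n')) \<in> prods G \<and> g \<in> nts0 G \<union> nts1 G}
   \<union> {(Some (n, g), [Inr (SymB s n' g)]) | n s n' g.
        (n, SBin s (SNt0 n') SHole) \<in> prods G \<and> g \<in> nts0 G \<union> nts1 G}"

definition spine_lang :: "('n, 'a, 's) spine_grammar \<Rightarrow> ('n, 'a, 's) sym list set" where
  "spine_lang G = cfg_lang (spine_prods G) None"

text \<open>The letter <theta', theta> is the pair (Some theta', theta); the end marker is None.\<close>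
definition next_word :: "'t list \<Rightarrow> ('t option \<times> 't) list" where
  "next_word w = zip (map Some (tl w) @ [None]) w"

definition Next :: "'t list set \<Rightarrow> ('t option \<times> 't) list set" where
  "Next L = next_word ` L"

type_synonym ('n, 'a, 's) letter = "('n, 'a, 's) sym option \<times> ('n, 'a, 's) sym"
type_synonym ('n, 'a, 's) leafsym = "(('n, 'a, 's) sym option \<times> 'a) \<times> 'n"
type_synonym ('n, 'a, 's) binsym = "(('n, 'a, 's) sym option \<times> 's) \<times> 'n \<times> 'n"
type_synonym ('n, 'a, 's) ftree = "(('n, 'a, 's) leafsym, ('n, 'a, 's) binsym) btree"

fun tgen :: "('s \<Rightarrow> nat) \<Rightarrow> ('n, 'a, 's) ftree \<Rightarrow> 'n" where
  "tgen d (Leaf ((s', a), n)) = n"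
| "tgen d (Node ((s', s), n1, n2) l r) = (if d s = 1 then n1 else n2)"

fun attach_rev :: "('s \<Rightarrow> nat) \<Rightarrow> ('n, 'a, 's) ftree set \<Rightarrow> ('n, 'a, 's) letter list
    \<Rightarrow> ('n, 'a, 's) ftree set" where
  "attach_rev d T [] = {}"
| "attach_rev d T [(s', SymA a n)] = {Leaf ((s', a), n)}"
| "attach_rev d T [(s', SymB s n1 n2)] = {}"
| "attach_rev d T ((s', SymA a n) # y # ys) = {}"
| "attach_rev d T ((s', SymB s n1 n2) # y # ys) =
     {Node ((s', s), n1, n2) t1 t2 | t1 t2.
        if d s = 1 then t1 \<in> attach_rev d T (y # ys) \<and> t2 \<in> T \<and> tgen d t2 = n2
        else t2 \<in> attach_rev d T (y # ys) \<and> t1 \<in> T \<and> tgen d t1 = n1}"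

definition attach :: "('s \<Rightarrow> nat) \<Rightarrow> ('n, 'a, 's) ftree set \<Rightarrow> ('n, 'a, 's) letter list
    \<Rightarrow> ('n, 'a, 's) ftree set" where
  "attach d T w = attach_rev d T (rev w)"

definition Fcal :: "('s \<Rightarrow> nat) \<Rightarrow> ('n, 'a, 's) letter list set \<Rightarrow> ('n, 'a, 's) ftree set" where
  "Fcal d L = \<Inter> {F. \<forall>w \<in> L. attach d F w \<subseteq> F}"

definition Fcal_S :: "('s \<Rightarrow> nat) \<Rightarrow> 'n \<Rightarrow> ('n, 'a, 's) letter list set \<Rightarrow> ('n, 'a, 's) ftree set" where
  "Fcal_S d S L = {t \<in> Fcal d L. tgen d t = S}"

record ('q, 'd, 'g) mpda =
  states :: "'q set"
  inp :: "'d set"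
  stk :: "'g set"
  trans :: "('q \<times> 'g option \<times> 'g option \<times> 'q) set"
  out :: "'q \<Rightarrow> 'd"
  init :: "'q set"
  fin :: "'q set"

definition opt_list :: "'g option \<Rightarrow> 'g list" where
  "opt_list x = (case x of None \<Rightarrow> [] | Some g \<Rightarrow> [g])"

definition is_mpda :: "('q, 'd, 'g) mpda \<Rightarrow> bool" where
  "is_mpda A \<longleftrightarrow> finite (states A) \<and> finite (inp A) \<and> finite (stk A) \<and>
     trans A \<subseteq> states A \<times> (insert None (Some ` stk A)) \<times> (insert None (Some ` stk A)) \<times> states A \<and>
     (\<forall>q g g' q'. (q, Some g, Some g', q') \<notin> trans A) \<and>
     out A ` states A \<subseteq> inp A \<and> init A \<subseteq> states A \<and> fin A \<subseteq> states A"

definition mmove :: "('q, 'd, 'g) mpda \<Rightarrow> 'q \<times> 'g list \<Rightarrow> 'q \<times> 'g list \<Rightarrow> bool" where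
  "mmove A c c' \<longleftrightarrow> (\<exists>q g g' q' \<alpha>. (q, g, g', q') \<in> trans A \<and> opt_list g @ \<alpha> \<noteq> [] \<and>
      c = (q, opt_list g @ \<alpha>) \<and> c' = (q', opt_list g' @ \<alpha>))"

definition accepting_run :: "('q, 'd, 'g) mpda \<Rightarrow> ('q \<times> 'g list) list \<Rightarrow> bool" where
  "accepting_run A cs \<longleftrightarrow> cs \<noteq> [] \<and>
     fst (hd cs) \<in> init A \<and> (\<exists>\<gamma> \<in> stk A. snd (hd cs) = [\<gamma>]) \<and>
     fst (last cs) \<in> fin A \<and> snd (last cs) = [] \<and>
     (\<forall>i < length cs - 1. mmove A (cs ! i) (cs ! Suc i))"

definition mpda_lang :: "('q, 'd, 'g) mpda \<Rightarrow> 'd list set" where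
  "mpda_lang A = {map (out A \<circ> fst) cs | cs. accepting_run A cs}"

definition pop_normalized :: "('q, 'd, 'g) mpda \<Rightarrow> bool" where
  "pop_normalized A \<longleftrightarrow> (\<exists>ret. ret ` stk A \<subseteq> states A \<and>
     (\<forall>q \<gamma> q'. (q, Some \<gamma>, None, q') \<in> trans A \<longrightarrow> q' = ret \<gamma>))"

end

theory Submission
  imports Defs "HOL-Library.Countable_Set"
begin


section \<open>Generic CFG facts\<close>

inductive gen_list :: "('N \<times> ('N + 'T) list) set \<Rightarrow> ('N + 'T) list \<Rightarrow> 'T list \<Rightarrow> bool"
  for Pr where
  gl_nil: "gen_list Pr [] []"
| gl_t: "gen_list Pr x w \<Longrightarrow> gen_list Pr (Inr t # x) (t # w)"
| gl_n: "(A, rhs) \<in> Pr \<Longrightarrow> gen_list Pr rhs u \<Longrightarrow> gen_list Pr x w \<Longrightarrow> gen_list Pr (Inl A # x) (u @ w)"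

lemma gen_list_app1:
  "gen_list Pr x w1 \<Longrightarrow> gen_list Pr y w2 \<Longrightarrow> gen_list Pr (x @ y) (w1 @ w2)"
  by (induction rule: gen_list.induct) (auto intro: gen_list.intros)

lemma gen_list_app2:
  "gen_list Pr (x @ y) w \<Longrightarrow> \<exists>w1 w2. w = w1 @ w2 \<and> gen_list Pr x w1 \<and> gen_list Pr y w2"
proof (induction x arbitrary: w)
  case Nil
  then show ?case by (auto intro: gen_list.intros)
next
  case (Cons s x)
  from Cons.prems show ?case
  proof (cases rule: gen_list.cases)
    case (gl_t x' w' t)
    then have "gen_list Pr (x @ y) w'" by simp
    then obtain w1 w2 where "w' = w1 @ w2" "gen_list Pr x w1" "gen_list Pr y w2" using Cons.IH by meson
    moreover have "gen_list Pr (s # x) (t # w1)" using gl_t \<open>gen_list Pr x w1\<close> by (auto intro: gen_list.intros)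
    ultimately show ?thesis using gl_t by (metis append_Cons)
  next
    case (gl_n A rhs u x' w')
    then have "gen_list Pr (x @ y) w'" by simp
    then obtain w1 w2 where "w' = w1 @ w2" "gen_list Pr x w1" "gen_list Pr y w2" using Cons.IH by meson
    moreover have "gen_list Pr (s # x) (u @ w1)" using gl_n \<open>gen_list Pr x w1\<close> by (auto intro: gen_list.intros)
    ultimately show ?thesis using gl_n by (metis append.assoc)
  qed simp
qed

lemma gen_list_map_Inr: "gen_list Pr (map Inr w) w"
  by (induction w) (auto intro: gen_list.intros)

lemma gen_list_single: "(A, rhs) \<in> Pr \<Longrightarrow> gen_list Pr rhs u \<Longrightarrow> gen_list Pr [Inl A] u"
  using gl_n[of A rhs Pr u "[]" "[]"] gl_nil[of Pr] by simp

lemma cfg_step_gen: "cfg_step Pr u v \<Longrightarrow> gen_list Pr v w \<Longrightarrow> gen_list Pr u w"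
proof -
  assume "cfg_step Pr u v" "gen_list Pr v w"
  then obtain x y A rhs where r: "(A, rhs) \<in> Pr" "u = x @ [Inl A] @ y" "v = x @ rhs @ y"
    unfolding cfg_step_def by blast
  then obtain w1 w' where "w = w1 @ w'" "gen_list Pr x w1" "gen_list Pr (rhs @ y) w'"
    using gen_list_app2 \<open>gen_list Pr v w\<close> by blast
  moreover then obtain w2 w3 where "w' = w2 @ w3" "gen_list Pr rhs w2" "gen_list Pr y w3"
    using gen_list_app2 by blast
  ultimately show ?thesis
  proof -
    assume a: "w = w1 @ w'" "gen_list Pr x w1" "w' = w2 @ w3" "gen_list Pr rhs w2" "gen_list Pr y w3"
    have "gen_list Pr ([Inl A] @ y) (w2 @ w3)"
      using gen_list_app1[OF gen_list_single[OF r(1) a(4)] a(5)] .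
    from gen_list_app1[OF a(2) this] show ?thesis using a r(2) by simp
  qed
qed

lemma steps_gen: "(cfg_step Pr)\<^sup>*\<^sup>* u v \<Longrightarrow> v = map Inr w \<Longrightarrow> gen_list Pr u w"
  by (induction rule: converse_rtranclp_induct) (auto intro: gen_list_map_Inr cfg_step_gen)

lemma cfg_step_cong: "cfg_step Pr u v \<Longrightarrow> cfg_step Pr (p @ u @ q) (p @ v @ q)"
  unfolding cfg_step_def by (metis append.assoc)

lemma cfg_steps_cong: "(cfg_step Pr)\<^sup>*\<^sup>* u v \<Longrightarrow> (cfg_step Pr)\<^sup>*\<^sup>* (p @ u @ q) (p @ v @ q)"
  by (induction rule: rtranclp_induct) (auto intro: rtranclp.rtrancl_into_rtrancl cfg_step_cong)

lemma gen_steps: "gen_list Pr x w \<Longrightarrow> (cfg_step Pr)\<^sup>*\<^sup>* x (map Inr w)"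
proof (induction rule: gen_list.induct)
  case gl_nil
  then show ?case by simp
next
  case (gl_t x w t)
  then show ?case using cfg_steps_cong[of Pr x "map Inr w" "[Inr t]" "[]"] by simp
next
  case (gl_n A rhs u x w)
  have "cfg_step Pr (Inl A # x) (rhs @ x)"
    unfolding cfg_step_def using gl_n(1) by (metis append_Cons append_Nil)
  moreover have "(cfg_step Pr)\<^sup>*\<^sup>* (rhs @ x) (map Inr u @ x)"
    using cfg_steps_cong[OF gl_n(4), of "[]" x] by simp
  moreover have "(cfg_step Pr)\<^sup>*\<^sup>* (map Inr u @ x) (map Inr u @ map Inr w)"
    using cfg_steps_cong[OF gl_n(5), of "map Inr u" "[]"] by simp
  ultimately show ?case by (simp add: converse_rtranclp_into_rtranclp rtranclp_trans)
qed

lemma cfg_lang_gen: "cfg_lang Pr S = {w. gen_list Pr [Inl S] w}"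
  unfolding cfg_lang_def using steps_gen gen_steps by blast


section \<open>Shapes of productions\<close>

lemma shapes:
  assumes "normalized_spine G d" "(n, r) \<in> prods G"
  shows "(n \<in> nts0 G \<and> (\<exists>a \<in> term0 G. r = SLeaf a))
      \<or> (n \<in> nts0 G \<and> (\<exists>b \<in> nts1 G. \<exists>a \<in> term0 G. r = SNt1 b (SLeaf a)))
      \<or> (n \<in> nts1 G \<and> (\<exists>b1 \<in> nts1 G. \<exists>b2 \<in> nts1 G. r = SNt1 b1 (SNt1 b2 SHole)))
      \<or> (n \<in> nts1 G \<and> (\<exists>s \<in> term2 G. \<exists>a \<in> nts0 G - {start G}.
            r = SBin s SHole (SNt0 a) \<and> d s = 1))
      \<or> (n \<in> nts1 G \<and> (\<exists>s \<in> term2 G. \<exists>a \<in> nts0 G - {start G}.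
            r = SBin s (SNt0 a) SHole \<and> d s = 2))"
  using assms unfolding normalized_spine_def by fast

lemma disj01: "normalized_spine G d \<Longrightarrow> nts0 G \<inter> nts1 G = {}"
  unfolding normalized_spine_def by blast

lemma sh_leaf: "normalized_spine G d \<Longrightarrow> (n, SLeaf a) \<in> prods G \<Longrightarrow> n \<in> nts0 G \<and> a \<in> term0 G"
  using shapes[of G d n "SLeaf a"] by auto

lemma sh_un: "normalized_spine G d \<Longrightarrow> (n, SNt1 b (SLeaf a)) \<in> prods G \<Longrightarrow>
    n \<in> nts0 G \<and> b \<in> nts1 G \<and> a \<in> term0 G"
  using shapes[of G d n "SNt1 b (SLeaf a)"] by auto

lemma sh_bin: "normalized_spine G d \<Longrightarrow> (n, SNt1 b1 (SNt1 b2 SHole)) \<in> prods G \<Longrightarrow>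
    n \<in> nts1 G \<and> b1 \<in> nts1 G \<and> b2 \<in> nts1 G"
  using shapes[of G d n "SNt1 b1 (SNt1 b2 SHole)"] by auto

lemma sh_l: "normalized_spine G d \<Longrightarrow> (n, SBin s SHole (SNt0 a)) \<in> prods G \<Longrightarrow>
    n \<in> nts1 G \<and> s \<in> term2 G \<and> a \<in> nts0 G \<and> d s = 1"
  using shapes[of G d n "SBin s SHole (SNt0 a)"] by auto

lemma sh_r: "normalized_spine G d \<Longrightarrow> (n, SBin s (SNt0 a) SHole) \<in> prods G \<Longrightarrow>
    n \<in> nts1 G \<and> s \<in> term2 G \<and> a \<in> nts0 G \<and> d s = 2"
  using shapes[of G d n "SBin s (SNt0 a) SHole"] by auto

section \<open>Spine language\<close>

definition leafl :: "('n, 'a, 's) spine_grammar \<Rightarrow> 'n \<Rightarrow> 'n \<Rightarrow> ('n, 'a, 's) sym \<Rightarrow> bool" where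
  "leafl G X g th \<longleftrightarrow> (\<exists>s n'. (X, SBin s SHole (SNt0 n')) \<in> prods G \<and> th = SymB s g n')
                   \<or> (\<exists>s n'. (X, SBin s (SNt0 n') SHole) \<in> prods G \<and> th = SymB s n' g)"

definition binp :: "('n, 'a, 's) spine_grammar \<Rightarrow> 'n \<Rightarrow> 'n \<Rightarrow> 'n \<Rightarrow> bool" where
  "binp G X Y R \<longleftrightarrow> (X, SNt1 R (SNt1 Y SHole)) \<in> prods G"

inductive genB :: "('n, 'a, 's) spine_grammar \<Rightarrow> 'n \<Rightarrow> 'n \<Rightarrow> ('n, 'a, 's) sym list \<Rightarrow> bool"
  for G where
  gB_leaf: "leafl G X g th \<Longrightarrow> genB G X g [th]"
| gB_bin: "binp G X Y R \<Longrightarrow> genB G Y g u \<Longrightarrow> genB G R g v \<Longrightarrow> genB G X g (u @ v)"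

definition SL0 :: "('n, 'a, 's) spine_grammar \<Rightarrow> ('n, 'a, 's) sym list set" where
  "SL0 G = {[SymA a n] | a n. (n, SLeaf a) \<in> prods G}"

definition SL1 :: "('n, 'a, 's) spine_grammar \<Rightarrow> ('n, 'a, 's) sym list set" where
  "SL1 G = {SymA a n # u | a n b u. (n, SNt1 b (SLeaf a)) \<in> prods G \<and> genB G b n u}"

lemma sp_cases:
  assumes "(A, rhs) \<in> spine_prods G"
  shows "(A = None \<and> (\<exists>n a. rhs = [Inr (SymA a n)] \<and> (n, SLeaf a) \<in> prods G))
    \<or> (A = None \<and> (\<exists>n b a. rhs = [Inr (SymA a n), Inl (Some (b, n))] \<and> (n, SNt1 b (SLeaf a)) \<in> prods G))
    \<or> (\<exists>n g b b'. A = Some (n, g) \<and> rhs = [Inl (Some (b', g)), Inl (Some (b, g))] \<and> binp G n b' b)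
    \<or> (\<exists>n g th. A = Some (n, g) \<and> rhs = [Inr th] \<and> leafl G n g th)"
  using assms unfolding spine_prods_def binp_def leafl_def by blast

lemma sp_gen:
  "gen_list (spine_prods G) x w \<Longrightarrow>
    (\<forall>X g. x = [Inl (Some (X, g))] \<longrightarrow> genB G X g w) \<and>
    (\<forall>Y R g. x = [Inl (Some (Y, g)), Inl (Some (R, g))] \<longrightarrow> (\<exists>u v. w = u @ v \<and> genB G Y g u \<and> genB G R g v)) \<and>
    (\<forall>t X g. x = [Inr t, Inl (Some (X, g))] \<longrightarrow> (\<exists>u. w = t # u \<and> genB G X g u)) \<and>
    (\<forall>t. x = [Inr t] \<longrightarrow> w = [t]) \<and> (x = [] \<longrightarrow> w = []) \<and>
    (x = [Inl None] \<longrightarrow> w \<in> SL0 G \<union> SL1 G)"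
proof (induction rule: gen_list.induct)
  case gl_nil
  then show ?case by simp
next
  case (gl_t x w t)
  then show ?case by auto
next
  case (gl_n A rhs u x w)
  have hA: "(\<forall>X g. A = Some (X, g) \<longrightarrow> genB G X g u) \<and> (A = None \<longrightarrow> u \<in> SL0 G \<union> SL1 G)"
    using sp_cases[OF gl_n.hyps(1)]
  proof (elim disjE exE conjE)
    fix n a assume "A = None" "rhs = [Inr (SymA a n)]" "(n, SLeaf a) \<in> prods G"
    then show ?thesis using gl_n.IH(1) unfolding SL0_def by auto
  next
    fix n b a assume "A = None" "rhs = [Inr (SymA a n), Inl (Some (b, n))]" "(n, SNt1 b (SLeaf a)) \<in> prods G"
    then show ?thesis using gl_n.IH(1) unfolding SL1_def by blast
  next
    fix n g b b' assume "A = Some (n, g)" "rhs = [Inl (Some (b', g)), Inl (Some (b, g))]" "binp G n b' b"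
    then show ?thesis using gl_n.IH(1) by (auto intro: gB_bin)
  next
    fix n g th assume "A = Some (n, g)" "rhs = [Inr th]" "leafl G n g th"
    then show ?thesis using gl_n.IH(1) by (auto intro: gB_leaf)
  qed
  show ?case using hA gl_n.IH(2) by (intro conjI allI impI) force+
qed

lemma genB_sp: "genB G X g w \<Longrightarrow> g \<in> nts0 G \<union> nts1 G \<Longrightarrow> gen_list (spine_prods G) [Inl (Some (X, g))] w"
proof (induction rule: genB.induct)
  case (gB_leaf X g th)
  then have "(Some (X, g), [Inr th]) \<in> spine_prods G"
    unfolding spine_prods_def leafl_def by blast
  then show ?case using gen_list_single gl_t[OF gl_nil] by fast
next
  case (gB_bin X Y R g u v)
  then have "(Some (X, g), [Inl (Some (Y, g)), Inl (Some (R, g))]) \<in> spine_prods G"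
    unfolding spine_prods_def binp_def by blast
  moreover have "gen_list (spine_prods G) [Inl (Some (Y, g)), Inl (Some (R, g))] (u @ v)"
    using gen_list_app1[OF gB_bin.IH(1) gB_bin.IH(2)] gB_bin.prems by simp
  ultimately show ?case using gen_list_single by fast
qed

lemma spine_lang_char:
  assumes "normalized_spine G d"
  shows "spine_lang G = SL0 G \<union> SL1 G"
proof
  show "spine_lang G \<subseteq> SL0 G \<union> SL1 G"
    unfolding spine_lang_def cfg_lang_gen using sp_gen by blast
next
  show "SL0 G \<union> SL1 G \<subseteq> spine_lang G"
  proof
    fix w assume "w \<in> SL0 G \<union> SL1 G"
    then show "w \<in> spine_lang G"
    proof
      assume "w \<in> SL0 G"
      then obtain a n where w: "w = [SymA a n]" "(n, SLeaf a) \<in> prods G" unfolding SL0_def by blast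
      then have "(None, [Inr (SymA a n)]) \<in> spine_prods G" unfolding spine_prods_def by blast
      then show ?thesis unfolding spine_lang_def cfg_lang_gen using w gen_list_single gl_t[OF gl_nil] by fast
    next
      assume "w \<in> SL1 G"
      then obtain a n b u where w: "w = SymA a n # u" "(n, SNt1 b (SLeaf a)) \<in> prods G" "genB G b n u"
        unfolding SL1_def by blast
      then have "(None, [Inr (SymA a n), Inl (Some (b, n))]) \<in> spine_prods G" unfolding spine_prods_def by blast
      moreover have "n \<in> nts0 G \<union> nts1 G" using sh_un[OF assms w(2)] by blast
      then have "gen_list (spine_prods G) [Inr (SymA a n), Inl (Some (b, n))] (SymA a n # u)"
        using genB_sp[OF w(3)] gl_t by fast
      ultimately show ?thesis unfolding spine_lang_def cfg_lang_gen using w gen_list_single by fast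
    qed
  qed
qed

inductive ctx :: "('n, 'a, 's) spine_grammar \<Rightarrow> 'n \<Rightarrow> 'n \<Rightarrow> 'n \<Rightarrow> ('n, 'a, 's) sym list \<Rightarrow> bool"
  for G where
  ctx_refl: "ctx G X X g []"
| ctx_step: "ctx G X Z g v \<Longrightarrow> binp G Z Y R \<Longrightarrow> genB G R g u \<Longrightarrow> ctx G X Y g (u @ v)"

lemma genB_ne: "genB G X g w \<Longrightarrow> w \<noteq> []"
  by (induction rule: genB.induct) auto
lemma ctx_nil: "ctx G X Y g [] \<Longrightarrow> X = Y"
  by (erule ctx.cases) (auto dest: genB_ne)
lemma ctx_trans: "ctx G Y' Y g v1 \<Longrightarrow> ctx G X Y' g v2 \<Longrightarrow> ctx G X Y g (v1 @ v2)"
proof (induction rule: ctx.induct)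
  case (ctx_refl A g)
  then show ?case by simp
next
  case (ctx_step X' Z g v Y R u)
  have "ctx G X Y g (u @ (v @ v2))" using ctx.ctx_step[OF ctx_step.IH[OF ctx_step.prems] ctx_step.hyps(2,3)] .
  then show ?case by simp
qed
lemma genB_ctx: "genB G X g w \<Longrightarrow> \<exists>Y th v. leafl G Y g th \<and> ctx G X Y g v \<and> w = th # v"
proof (induction rule: genB.induct)
  case (gB_leaf X g th)
  have "leafl G X g th \<and> ctx G X X g [] \<and> [th] = th # []" using gB_leaf ctx_refl by simp
  then show ?case by blast
next
  case (gB_bin X Y' R g u v')
  from gB_bin.IH(1) obtain Y th v1 where a: "leafl G Y g th" "ctx G Y' Y g v1" "u = th # v1" by blast
  have "ctx G X Y' g (v' @ [])" using ctx_step[OF ctx_refl gB_bin.hyps(1) gB_bin.hyps(3)] .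
  then have "ctx G X Y g (v1 @ v')" using ctx_trans[OF a(2)] by simp
  then have "leafl G Y g th \<and> ctx G X Y g (v1 @ v') \<and> u @ v' = th # (v1 @ v')" using a by simp
  then show ?case by blast
qed

lemma ctx_genB: "ctx G X Y g v \<Longrightarrow> genB G Y g w0 \<Longrightarrow> genB G X g (w0 @ v)"
proof (induction arbitrary: w0 rule: ctx.induct)
  case (ctx_refl A g)
  then show ?case by simp
next
  case (ctx_step X Z g v Y R u)
  have "genB G Z g (w0 @ u)" using gB_bin[OF ctx_step.hyps(2) ctx_step.prems ctx_step.hyps(3)] .
  from ctx_step.IH[OF this] show ?case by simp
qed


section \<open>Next words and links\<close>

definition nw :: "'t list \<Rightarrow> 't option \<Rightarrow> ('t option \<times> 't) list" where
  "nw x e = zip (map Some (tl x) @ [e]) x"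

lemma next_word_nw: "next_word x = nw x None"
  unfolding next_word_def nw_def by simp

lemma nw_Nil[simp]: "nw [] e = []"
  unfolding nw_def by simp

lemma nw_Cons: "nw (a # x) e = (if x = [] then e else Some (hd x), a) # nw x e"
  unfolding nw_def by (cases x) auto

lemma nw_single[simp]: "nw [a] e = [(e, a)]"
  by (simp add: nw_Cons)

lemma nw_append: "y \<noteq> [] \<Longrightarrow> nw (x @ y) e = nw x (Some (hd y)) @ nw y e"
  by (induction x) (auto simp: nw_Cons)

lemma nw_length[simp]: "length (nw x e) = length x"
  unfolding nw_def by simp

lemma nw_snd[simp]: "map snd (nw x e) = x"
  by (induction x) (auto simp: nw_Cons)

fun lnk :: "('t option \<times> 't) list \<Rightarrow> 't option \<Rightarrow> bool" where
  "lnk [] e = True"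
| "lnk [p] e = (fst p = e)"
| "lnk (p # q # r) e = (fst p = Some (snd q) \<and> lnk (q # r) e)"

lemma lnk_Cons: "lnk (p # w) e = (if w = [] then fst p = e else fst p = Some (snd (hd w)) \<and> lnk w e)"
  by (cases w) auto

lemma lnk_append: "w2 \<noteq> [] \<Longrightarrow> lnk w1 (Some (snd (hd w2))) \<Longrightarrow> lnk w2 e \<Longrightarrow> lnk (w1 @ w2) e"
  by (induction w1) (auto simp: lnk_Cons hd_append split: if_splits)

lemma nw_unique: "lnk w e \<Longrightarrow> nw (map snd w) e = w"
  by (induction w e rule: lnk.induct) (auto simp: nw_Cons)


section \<open>Generic MPDA facts\<close>

lemma opt_list_simps[simp]: "opt_list None = []" "opt_list (Some g) = [g]"
  unfolding opt_list_def by simp_all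

inductive Wr :: "('q, 'd, 'g) mpda \<Rightarrow> 'q \<Rightarrow> 'g \<Rightarrow> 'd list \<Rightarrow> 'q \<Rightarrow> bool" for A where
  wpop: "(q, Some \<gamma>, None, q') \<in> trans A \<Longrightarrow> Wr A q \<gamma> [out A q] q'"
| wnoop: "(q, None, None, q1) \<in> trans A \<Longrightarrow> Wr A q1 \<gamma> w q' \<Longrightarrow> Wr A q \<gamma> (out A q # w) q'"
| wpush: "(q, None, Some \<gamma>', q1) \<in> trans A \<Longrightarrow> Wr A q1 \<gamma>' w1 q2 \<Longrightarrow> Wr A q2 \<gamma> w2 q'
           \<Longrightarrow> Wr A q \<gamma> (out A q # w1 @ w2) q'"

inductive orun :: "('q, 'd, 'g) mpda \<Rightarrow> 'q \<times> 'g list \<Rightarrow> 'd list \<Rightarrow> 'q \<times> 'g list \<Rightarrow> bool" for A where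
  or_nil: "orun A c [] c"
| or_step: "mmove A c c1 \<Longrightarrow> orun A c1 w c' \<Longrightarrow> orun A c (out A (fst c) # w) c'"

lemma orun_trans: "orun A c w1 c1 \<Longrightarrow> orun A c1 w2 c2 \<Longrightarrow> orun A c (w1 @ w2) c2"
  by (induction rule: orun.induct) (auto intro: or_step)

lemma chain_orun:
  "cs \<noteq> [] \<Longrightarrow> (\<forall>i < length cs - 1. mmove A (cs ! i) (cs ! Suc i)) \<Longrightarrow>
    orun A (hd cs) (map (out A \<circ> fst) (butlast cs)) (last cs)"
proof (induction cs)
  case Nil
  then show ?case by simp
next
  case (Cons c cs)
  show ?case
  proof (cases "cs = []")
    case True
    then show ?thesis by (simp add: or_nil)
  next
    case False
    have m: "mmove A c (hd cs)" using Cons.prems(2) False by (cases cs) auto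
    have "\<forall>i < length cs - 1. mmove A (cs ! i) (cs ! Suc i)"
    proof (intro allI impI)
      fix i assume "i < length cs - 1"
      then show "mmove A (cs ! i) (cs ! Suc i)" using Cons.prems(2)[rule_format, of "Suc i"] by simp
    qed
    then have "orun A (hd cs) (map (out A \<circ> fst) (butlast cs)) (last cs)" using Cons.IH False by blast
    then show ?thesis using or_step[OF m] False by (simp add: comp_def)
  qed
qed

lemma orun_chain:
  "orun A c w c' \<Longrightarrow> \<exists>cs. cs \<noteq> [] \<and> hd cs = c \<and> last cs = c' \<and>
     (\<forall>i < length cs - 1. mmove A (cs ! i) (cs ! Suc i)) \<and> map (out A \<circ> fst) (butlast cs) = w"
proof (induction rule: orun.induct)
  case (or_nil c)
  then show ?case by (intro exI[of _ "[c]"]) simp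
next
  case (or_step c c1 w c')
  then obtain cs where cs: "cs \<noteq> []" "hd cs = c1" "last cs = c'"
    "\<forall>i < length cs - 1. mmove A (cs ! i) (cs ! Suc i)" "map (out A \<circ> fst) (butlast cs) = w" by blast
  have "\<forall>i < length (c # cs) - 1. mmove A ((c # cs) ! i) ((c # cs) ! Suc i)"
  proof (intro allI impI)
    fix i assume "i < length (c # cs) - 1"
    then show "mmove A ((c # cs) ! i) ((c # cs) ! Suc i)"
      using cs or_step.hyps(1) by (cases i) (auto simp: hd_conv_nth)
  qed
  then show ?case using cs by (intro exI[of _ "c # cs"]) auto
qed

lemma mpda_lang_orun:
  "mpda_lang A = {w @ [out A qf] | q \<gamma> w qf. q \<in> init A \<and> \<gamma> \<in> stk A \<and> qf \<in> fin A \<and> orun A (q, [\<gamma>]) w (qf, [])}"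
proof (intro set_eqI iffI)
  fix x assume "x \<in> mpda_lang A"
  then obtain cs where x: "x = map (out A \<circ> fst) cs" "accepting_run A cs" unfolding mpda_lang_def by blast
  then have cs: "cs \<noteq> []" "fst (hd cs) \<in> init A" "\<exists>\<gamma> \<in> stk A. snd (hd cs) = [\<gamma>]"
    "fst (last cs) \<in> fin A" "snd (last cs) = []" "\<forall>i < length cs - 1. mmove A (cs ! i) (cs ! Suc i)"
    unfolding accepting_run_def by blast+
  obtain \<gamma> where g: "\<gamma> \<in> stk A" "snd (hd cs) = [\<gamma>]" using cs(3) by blast
  have o: "orun A (hd cs) (map (out A \<circ> fst) (butlast cs)) (last cs)" using chain_orun cs by blast
  have "x = map (out A \<circ> fst) (butlast cs) @ [out A (fst (last cs))]"
    using x(1) cs(1) by (metis append_butlast_last_id comp_apply list.simps(8,9) map_append)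
  moreover have "hd cs = (fst (hd cs), [\<gamma>])" "last cs = (fst (last cs), [])" using g cs(5)
    by (metis prod.collapse)+
  ultimately show "x \<in> {w @ [out A qf] | q \<gamma> w qf. q \<in> init A \<and> \<gamma> \<in> stk A \<and> qf \<in> fin A \<and> orun A (q, [\<gamma>]) w (qf, [])}"
    using o cs g by (metis (mono_tags, lifting) mem_Collect_eq)
next
  fix x assume "x \<in> {w @ [out A qf] | q \<gamma> w qf. q \<in> init A \<and> \<gamma> \<in> stk A \<and> qf \<in> fin A \<and> orun A (q, [\<gamma>]) w (qf, [])}"
  then obtain q \<gamma> w qf where a: "x = w @ [out A qf]" "q \<in> init A" "\<gamma> \<in> stk A" "qf \<in> fin A"
    "orun A (q, [\<gamma>]) w (qf, [])" by blast
  obtain cs where cs: "cs \<noteq> []" "hd cs = (q, [\<gamma>])" "last cs = (qf, [])"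
    "\<forall>i < length cs - 1. mmove A (cs ! i) (cs ! Suc i)" "map (out A \<circ> fst) (butlast cs) = w"
    using orun_chain[OF a(5)] by blast
  have "accepting_run A cs" unfolding accepting_run_def using cs a by auto
  moreover have "x = map (out A \<circ> fst) cs"
    using a(1) cs by (metis append_butlast_last_id comp_apply fst_conv list.simps(8,9) map_append)
  ultimately show "x \<in> mpda_lang A" unfolding mpda_lang_def by blast
qed

lemma Wr_orun: "Wr A q \<gamma> w q' \<Longrightarrow> orun A (q, \<gamma> # \<alpha>) w (q', \<alpha>)"
proof (induction arbitrary: \<alpha> rule: Wr.induct)
  case (wpop q \<gamma> q')
  have "mmove A (q, \<gamma> # \<alpha>) (q', \<alpha>)" unfolding mmove_def using wpop
    by (intro exI[of _ q] exI[of _ "Some \<gamma>"] exI[of _ "None"] exI[of _ q'] exI[of _ \<alpha>]) simp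
  then show ?case using or_step[OF _ or_nil] by fastforce
next
  case (wnoop q q1 \<gamma> w q')
  have "mmove A (q, \<gamma> # \<alpha>) (q1, \<gamma> # \<alpha>)" unfolding mmove_def using wnoop
    by (intro exI[of _ q] exI[of _ "None"] exI[of _ "None"] exI[of _ q1] exI[of _ "\<gamma> # \<alpha>"]) simp
  then show ?case using or_step wnoop.IH by fastforce
next
  case (wpush q \<gamma>' q1 w1 q2 \<gamma> w2 q')
  have "mmove A (q, \<gamma> # \<alpha>) (q1, \<gamma>' # \<gamma> # \<alpha>)" unfolding mmove_def using wpush
    by (intro exI[of _ q] exI[of _ "None"] exI[of _ "Some \<gamma>'"] exI[of _ q1] exI[of _ "\<gamma> # \<alpha>"]) simp
  moreover have "orun A (q1, \<gamma>' # \<gamma> # \<alpha>) (w1 @ w2) (q', \<alpha>)"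
    using orun_trans[OF wpush.IH(1) wpush.IH(2)] .
  ultimately show ?case using or_step by fastforce
qed

lemma orun_empty: "orun A c w c' \<Longrightarrow> snd c = [] \<Longrightarrow> w = [] \<and> c' = c"
  by (induction rule: orun.induct) (auto simp: mmove_def)

lemma orun_Wr:
  assumes nss: "\<forall>q g g' q'. (q, Some g, Some g', q') \<notin> trans A"
  shows "orun A c w c' \<Longrightarrow> c = (q, \<gamma> # \<alpha>) \<Longrightarrow> length (snd c') \<le> length \<alpha> \<Longrightarrow>
    \<exists>w1 w2 q''. w = w1 @ w2 \<and> Wr A q \<gamma> w1 q'' \<and> orun A (q'', \<alpha>) w2 c'"
proof (induction "length w" arbitrary: w c q \<gamma> \<alpha> rule: less_induct)
  case less
  from less.prems(1) show ?case
  proof (cases rule: orun.cases)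
    case or_nil
    then show ?thesis using less.prems by auto
  next
    case (or_step c1 w')
    from or_step(2) obtain p g g' p1 \<alpha>0 where m: "(p, g, g', p1) \<in> trans A" "opt_list g @ \<alpha>0 \<noteq> []"
      "c = (p, opt_list g @ \<alpha>0)" "c1 = (p1, opt_list g' @ \<alpha>0)" unfolding mmove_def by blast
    have pq: "p = q" using m(3) less.prems(2) by simp
    have lw: "length w' < length w" using or_step(1) by simp
    show ?thesis
    proof (cases g)
      case None
      then have a0: "\<alpha>0 = \<gamma> # \<alpha>" using m(3) less.prems(2) by simp
      show ?thesis
      proof (cases g')
        case None
        then have "c1 = (p1, \<gamma> # \<alpha>)" using m(4) a0 by simp
        then obtain w1 w2 q'' where r: "w' = w1 @ w2" "Wr A p1 \<gamma> w1 q''" "orun A (q'', \<alpha>) w2 c'"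
          using less.hyps[OF lw or_step(3) _ less.prems(3)] by blast
        have "Wr A q \<gamma> (out A q # w1) q''" using wnoop[OF _ r(2)] m(1) pq \<open>g = None\<close> None by simp
        then show ?thesis using r or_step(1) less.prems(2)
          by (intro exI[of _ "out A q # w1"] exI[of _ w2] exI[of _ q'']) simp
      next
        case (Some \<gamma>')
        then have c1: "c1 = (p1, \<gamma>' # \<gamma> # \<alpha>)" using m(4) a0 by simp
        have "length (snd c') \<le> length (\<gamma> # \<alpha>)" using less.prems(3) by simp
        then obtain u1 u2 q2 where r: "w' = u1 @ u2" "Wr A p1 \<gamma>' u1 q2" "orun A (q2, \<gamma> # \<alpha>) u2 c'"
          using less.hyps[OF lw or_step(3) c1] by blast
        have "length u2 < length w" using lw r(1) by simp
        then obtain v1 v2 q'' where r2: "u2 = v1 @ v2" "Wr A q2 \<gamma> v1 q''" "orun A (q'', \<alpha>) v2 c'"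
          using less.hyps[OF _ r(3) _ less.prems(3)] by blast
        have "Wr A q \<gamma> (out A q # u1 @ v1) q''" using wpush[OF _ r(2) r2(2)] m(1) pq \<open>g = None\<close> Some by simp
        then show ?thesis using r r2 or_step(1) less.prems(2)
          by (intro exI[of _ "out A q # u1 @ v1"] exI[of _ v2] exI[of _ q'']) simp
      qed
    next
      case (Some x)
      then have x: "x = \<gamma>" "\<alpha>0 = \<alpha>" using m(3) less.prems(2) by simp_all
      have "g' = None" using nss m(1) Some by (cases g') auto
      then have "c1 = (p1, \<alpha>)" using m(4) x by simp
      moreover have "Wr A q \<gamma> [out A q] p1" using wpop m(1) Some x pq \<open>g' = None\<close> by simp
      ultimately show ?thesis using or_step less.prems(2)
        by (intro exI[of _ "[out A q]"] exI[of _ w'] exI[of _ p1]) simp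
    qed
  qed
qed

lemma mpda_lang_Wr:
  assumes nss: "\<forall>q g g' q'. (q, Some g, Some g', q') \<notin> trans A"
  shows "mpda_lang A = {w @ [out A qf] | q \<gamma> w qf. q \<in> init A \<and> \<gamma> \<in> stk A \<and> qf \<in> fin A \<and> Wr A q \<gamma> w qf}"
proof -
  have "orun A (q, [\<gamma>]) w (qf, []) \<longleftrightarrow> Wr A q \<gamma> w qf" for q \<gamma> w qf
  proof
    assume "orun A (q, [\<gamma>]) w (qf, [])"
    then obtain w1 w2 q'' where r: "w = w1 @ w2" "Wr A q \<gamma> w1 q''" "orun A (q'', []) w2 (qf, [])"
      using orun_Wr[OF nss, of "(q, [\<gamma>])" w "(qf, [])" q \<gamma> "[]"] by auto
    then show "Wr A q \<gamma> w qf" using orun_empty[OF r(3)] by simp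
  next
    assume "Wr A q \<gamma> w qf"
    then show "orun A (q, [\<gamma>]) w (qf, [])" using Wr_orun by fastforce
  qed
  then show ?thesis unfolding mpda_lang_orun by simp
qed


section \<open>The machine\<close>

datatype 'n kd = KInit 'n 'n | KCtx 'n 'n 'n | KFin

type_synonym ('n, 'a, 's) ast = "('n, 'a, 's) letter \<times> 'n kd"

definition NN :: "('n, 'a, 's) spine_grammar \<Rightarrow> 'n set" where
  "NN G = nts0 G \<union> nts1 G"

definition Th :: "('n, 'a, 's) spine_grammar \<Rightarrow> ('n, 'a, 's) sym set" where
  "Th G = (\<lambda>(a, n). SymA a n) ` (term0 G \<times> NN G) \<union> (\<lambda>(s, x, y). SymB s x y) ` (term2 G \<times> NN G \<times> NN G)"

definition Lt :: "('n, 'a, 's) spine_grammar \<Rightarrow> ('n, 'a, 's) letter set" where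
  "Lt G = insert None (Some ` Th G) \<times> Th G"

definition Ks :: "('n, 'a, 's) spine_grammar \<Rightarrow> 'n kd set" where
  "Ks G = (\<lambda>(b, n). KInit b n) ` (NN G \<times> NN G) \<union> (\<lambda>(x, y, g). KCtx x y g) ` (NN G \<times> NN G \<times> NN G) \<union> {KFin}"

definition Qs :: "('n, 'a, 's) spine_grammar \<Rightarrow> ('n, 'a, 's) ast set" where
  "Qs G = Lt G \<times> Ks G"

lemma finite_Qs: "normalized_spine G d \<Longrightarrow> finite (Qs G)"
  unfolding Qs_def Lt_def Ks_def Th_def NN_def normalized_spine_def by auto

lemma finite_Lt: "normalized_spine G d \<Longrightarrow> finite (Lt G)"
  unfolding Lt_def Th_def NN_def normalized_spine_def by auto

inductive apop :: "('n, 'a, 's) spine_grammar \<Rightarrow> ('n, 'a, 's) ast \<Rightarrow> ('n, 'a, 's) ast \<Rightarrow> bool" for G where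
  ap_ctx: "binp G X Y R \<Longrightarrow> leafl G R g (snd l') \<Longrightarrow> fst l = Some (snd l') \<Longrightarrow>
    K' = KFin \<or> (\<exists>X' Y' g'. K' = KCtx X' Y' g') \<Longrightarrow> apop G (l, KCtx X Y g) (l', K')"
| ap_init: "leafl G b n (snd l') \<Longrightarrow> fst l = Some (snd l') \<Longrightarrow>
    K' = KFin \<or> (\<exists>X' Y' g'. K' = KCtx X' Y' g') \<Longrightarrow> apop G (l, KInit b n) (l', K')"

inductive anoop :: "('n, 'a, 's) spine_grammar \<Rightarrow> ('n, 'a, 's) ast \<Rightarrow> ('n, 'a, 's) ast \<Rightarrow> bool" for G where
  an1: "binp G Z Y R \<Longrightarrow> leafl G R g (snd l') \<Longrightarrow> fst l = Some (snd l') \<Longrightarrow>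
    anoop G (l, KCtx X Y g) (l', KCtx X Z g)"
| an2: "binp G X Y R \<Longrightarrow> leafl G R' g (snd l') \<Longrightarrow> fst l = Some (snd l') \<Longrightarrow>
    anoop G (l, KCtx X Y g) (l', KCtx R R' g)"
| an3: "leafl G R' n (snd l') \<Longrightarrow> fst l = Some (snd l') \<Longrightarrow>
    anoop G (l, KInit b n) (l', KCtx b R' n)"

inductive apush :: "('n, 'a, 's) spine_grammar \<Rightarrow> ('n, 'a, 's) ast \<Rightarrow> ('n, 'a, 's) ast \<Rightarrow> ('n, 'a, 's) ast \<Rightarrow> bool"
  for G where
  apu: "binp G Z Y R \<Longrightarrow> leafl G R' g (snd l') \<Longrightarrow> fst l = Some (snd l') \<Longrightarrow>
    apush G (l, KCtx X Y g) (l'', KCtx X Z g) (l', KCtx R R' g)"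

definition enc :: "('n, 'a, 's) spine_grammar \<Rightarrow> ('n, 'a, 's) ast \<Rightarrow> nat" where
  "enc G = to_nat_on (Qs G)"

definition mach :: "('n, 'a, 's) spine_grammar \<Rightarrow> (nat, ('n, 'a, 's) letter, nat) mpda" where
  "mach G = \<lparr>states = enc G ` Qs G, inp = Lt G, stk = enc G ` Qs G,
     trans = {(enc G q, Some (enc G \<gamma>), None, enc G \<gamma>) | q \<gamma>. q \<in> Qs G \<and> \<gamma> \<in> Qs G \<and> apop G q \<gamma>}
       \<union> {(enc G q, None, None, enc G q') | q q'. q \<in> Qs G \<and> q' \<in> Qs G \<and> anoop G q q'}
       \<union> {(enc G q, None, Some (enc G \<gamma>), enc G q') | q \<gamma> q'. q \<in> Qs G \<and> \<gamma> \<in> Qs G \<and> q' \<in> Qs G \<and> apush G q \<gamma> q'},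
     out = \<lambda>k. fst (from_nat_into (Qs G) k),
     init = enc G ` {q \<in> Qs G. \<exists>a n b. snd q = KInit b n \<and> snd (fst q) = SymA a n \<and> (n, SNt1 b (SLeaf a)) \<in> prods G},
     fin = enc G ` {q \<in> Qs G. snd q = KFin \<and> fst (fst q) = None}\<rparr>"

definition winv :: "('n, 'a, 's) spine_grammar \<Rightarrow> ('n, 'a, 's) ast \<Rightarrow> ('n, 'a, 's) ast \<Rightarrow> ('n, 'a, 's) letter list \<Rightarrow> bool" where
  "winv G q \<gamma> w \<longleftrightarrow> w \<noteq> [] \<and> hd w = fst q \<and> lnk w (Some (snd (fst \<gamma>))) \<and>
     (case snd q of KCtx X Y g \<Rightarrow> ctx G X Y g (map snd (tl w) @ [snd (fst \<gamma>)])
        | KInit b n \<Rightarrow> genB G b n (map snd (tl w) @ [snd (fst \<gamma>)])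
        | KFin \<Rightarrow> False)"

context
  fixes G :: "('n, 'a, 's) spine_grammar" and d :: "'s \<Rightarrow> nat"
  assumes norm: "normalized_spine G d"
begin

lemma cQ: "countable (Qs G)"
  using finite_Qs[OF norm] by (rule countable_finite)

lemma enc_inj: "q \<in> Qs G \<Longrightarrow> q' \<in> Qs G \<Longrightarrow> enc G q = enc G q' \<longleftrightarrow> q = q'"
  unfolding enc_def using cQ by simp

lemma out_enc: "q \<in> Qs G \<Longrightarrow> out (mach G) (enc G q) = fst q"
  unfolding mach_def enc_def using cQ by simp

lemma tr_pop: "(k, Some gk, None, k') \<in> trans (mach G) \<Longrightarrow>
  \<exists>q \<gamma>. q \<in> Qs G \<and> \<gamma> \<in> Qs G \<and> k = enc G q \<and> gk = enc G \<gamma> \<and> k' = enc G \<gamma> \<and> apop G q \<gamma>"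
  unfolding mach_def by (auto; blast)

lemma tr_noop: "(k, None, None, k') \<in> trans (mach G) \<Longrightarrow>
  \<exists>q q'. q \<in> Qs G \<and> q' \<in> Qs G \<and> k = enc G q \<and> k' = enc G q' \<and> anoop G q q'"
  unfolding mach_def by (auto; blast)

lemma tr_push: "(k, None, Some gk, k') \<in> trans (mach G) \<Longrightarrow>
  \<exists>q \<gamma> q'. q \<in> Qs G \<and> \<gamma> \<in> Qs G \<and> q' \<in> Qs G \<and> k = enc G q \<and> gk = enc G \<gamma> \<and> k' = enc G q' \<and> apush G q \<gamma> q'"
  unfolding mach_def by (auto; blast)

lemma no_ss: "\<forall>q g g' q'. (q, Some g, Some g', q') \<notin> trans (mach G)"
  unfolding mach_def by auto

end

context
  fixes G :: "('n, 'a, 's) spine_grammar" and d :: "'s \<Rightarrow> nat"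
  assumes norm: "normalized_spine G d"
begin
lemma sound: "Wr (mach G) k gk w k' \<Longrightarrow>
  \<exists>q \<gamma>. q \<in> Qs G \<and> \<gamma> \<in> Qs G \<and> k = enc G q \<and> gk = enc G \<gamma> \<and> k' = gk \<and> winv G q \<gamma> w"
proof (induction rule: Wr.induct)
  case (wpop k gk k')
  obtain q \<gamma> where d: "q \<in> Qs G" "\<gamma> \<in> Qs G" "k = enc G q" "gk = enc G \<gamma>" "k' = enc G \<gamma>" "apop G q \<gamma>"
    using tr_pop[OF norm wpop] by blast
  have o: "out (mach G) k = fst q" using out_enc[OF norm] d by simp
  have "winv G q \<gamma> [fst q]" using d(6)
  proof (cases rule: apop.cases)
    case (ap_ctx X Y R g l' l K')
    have "ctx G X Y g ([snd l'] @ [])" by (rule ctx_step[OF ctx_refl ap_ctx(3) gB_leaf[OF ap_ctx(4)]])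
    then show ?thesis using ap_ctx unfolding winv_def by simp
  next
    case (ap_init b n l' l K')
    then show ?thesis unfolding winv_def by (simp add: gB_leaf)
  qed
  then show ?case using d o by (intro exI[of _ q] exI[of _ \<gamma>]) simp
next
  case (wnoop k k1 gk w k')
  obtain q q1 where d: "q \<in> Qs G" "q1 \<in> Qs G" "k = enc G q" "k1 = enc G q1" "anoop G q q1"
    using tr_noop[OF norm wnoop(1)] by blast
  obtain q1' \<gamma> where ih: "q1' \<in> Qs G" "\<gamma> \<in> Qs G" "k1 = enc G q1'" "gk = enc G \<gamma>" "k' = gk" "winv G q1' \<gamma> w"
    using wnoop.IH by blast
  have "q1' = q1" using ih(1,3) d(2,4) enc_inj[OF norm] by metis
  then have iv: "winv G q1 \<gamma> w" using ih by simp
  have o: "out (mach G) k = fst q" using out_enc[OF norm] d by simp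
  have w: "w \<noteq> []" "hd w = fst q1" "lnk w (Some (snd (fst \<gamma>)))" using iv unfolding winv_def by auto
  have tl: "map snd (tl (fst q # w)) @ [snd (fst \<gamma>)] = snd (fst q1) # (map snd (tl w) @ [snd (fst \<gamma>)])"
    using w by (cases w) auto
  have "winv G q \<gamma> (fst q # w)" using d(5)
  proof (cases rule: anoop.cases)
    case (an1 Z Y R g l' l X)
    have c: "ctx G X Z g (map snd (tl w) @ [snd (fst \<gamma>)])" using iv an1 unfolding winv_def by simp
    have "ctx G X Y g ([snd l'] @ (map snd (tl w) @ [snd (fst \<gamma>)]))"
      by (rule ctx_step[OF c an1(3) gB_leaf[OF an1(4)]])
    then show ?thesis using an1 w tl unfolding winv_def by (simp add: lnk_Cons)
  next
    case (an2 X Y R R' g l' l)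
    have c: "ctx G R R' g (map snd (tl w) @ [snd (fst \<gamma>)])" using iv an2 unfolding winv_def by simp
    have gb: "genB G R g ([snd l'] @ (map snd (tl w) @ [snd (fst \<gamma>)]))"
      by (rule ctx_genB[OF c gB_leaf[OF an2(4)]])
    have "ctx G X Y g (([snd l'] @ (map snd (tl w) @ [snd (fst \<gamma>)])) @ [])"
      by (rule ctx_step[OF ctx_refl an2(3) gb])
    then show ?thesis using an2 w tl unfolding winv_def by (simp add: lnk_Cons)
  next
    case (an3 R' n l' l b)
    have c: "ctx G b R' n (map snd (tl w) @ [snd (fst \<gamma>)])" using iv an3 unfolding winv_def by simp
    have gb: "genB G b n ([snd l'] @ (map snd (tl w) @ [snd (fst \<gamma>)]))"
      by (rule ctx_genB[OF c gB_leaf[OF an3(3)]])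
    then show ?thesis using an3 w tl unfolding winv_def by (simp add: lnk_Cons)
  qed
  then show ?case using d ih o by (intro exI[of _ q] exI[of _ \<gamma>]) simp
next
  case (wpush k gk' k1 w1 k2 gk w2 k')
  obtain q \<gamma>' q1 where d: "q \<in> Qs G" "\<gamma>' \<in> Qs G" "q1 \<in> Qs G" "k = enc G q" "gk' = enc G \<gamma>'"
    "k1 = enc G q1" "apush G q \<gamma>' q1"
    using tr_push[OF norm wpush(1)] by blast
  obtain q1' \<gamma>'' where ih1: "q1' \<in> Qs G" "\<gamma>'' \<in> Qs G" "k1 = enc G q1'" "gk' = enc G \<gamma>''" "k2 = gk'"
    "winv G q1' \<gamma>'' w1"
    using wpush.IH(1) by blast
  obtain q2 \<gamma> where ih2: "q2 \<in> Qs G" "\<gamma> \<in> Qs G" "k2 = enc G q2" "gk = enc G \<gamma>" "k' = gk"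
    "winv G q2 \<gamma> w2"
    using wpush.IH(2) by blast
  have e1: "q1' = q1" using ih1(1,3) d(3,6) enc_inj[OF norm] by metis
  have e2: "\<gamma>'' = \<gamma>'" using ih1(2,4) d(2,5) enc_inj[OF norm] by metis
  have e3: "q2 = \<gamma>'" using ih2(1,3) ih1(5) d(2,5) enc_inj[OF norm] by metis
  note e = e1 e2 e3
  have iv1: "winv G q1 \<gamma>' w1" and iv2: "winv G \<gamma>' \<gamma> w2" using ih1(6) ih2(6) e by auto
  have o: "out (mach G) k = fst q" using out_enc[OF norm] d by simp
  have w1: "w1 \<noteq> []" "hd w1 = fst q1" "lnk w1 (Some (snd (fst \<gamma>')))" using iv1 unfolding winv_def by auto
  have w2: "w2 \<noteq> []" "hd w2 = fst \<gamma>'" "lnk w2 (Some (snd (fst \<gamma>)))" using iv2 unfolding winv_def by auto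
  have lk: "lnk (w1 @ w2) (Some (snd (fst \<gamma>)))" using lnk_append[OF w2(1) _ w2(3)] w1(3) w2(2) by simp
  have tl: "map snd (tl (fst q # w1 @ w2)) @ [snd (fst \<gamma>)] =
     (snd (fst q1) # map snd (tl w1) @ [snd (fst \<gamma>')]) @ (map snd (tl w2) @ [snd (fst \<gamma>)])"
    using w1 w2 by (cases w1; cases w2) auto
  have "winv G q \<gamma> (fst q # w1 @ w2)" using d(7)
  proof (cases rule: apush.cases)
    case (apu Z Y R R' g l' l X l'')
    have c1: "ctx G R R' g (map snd (tl w1) @ [snd (fst \<gamma>')])" using iv1 apu unfolding winv_def by simp
    have c2: "ctx G X Z g (map snd (tl w2) @ [snd (fst \<gamma>)])" using iv2 apu unfolding winv_def by simp
    have gb: "genB G R g ([snd l'] @ (map snd (tl w1) @ [snd (fst \<gamma>')]))"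
      by (rule ctx_genB[OF c1 gB_leaf[OF apu(5)]])
    have "ctx G X Y g (([snd l'] @ (map snd (tl w1) @ [snd (fst \<gamma>')])) @ (map snd (tl w2) @ [snd (fst \<gamma>)]))"
      by (rule ctx_step[OF c2 apu(4) gb])
    then show ?thesis using apu w1 w2 tl lk unfolding winv_def by (simp add: lnk_Cons)
  qed
  then show ?case using d ih2 o e by (intro exI[of _ q] exI[of _ \<gamma>]) simp
qed

end


locale nsp =
  fixes G :: "('n, 'a, 's) spine_grammar" and d :: "'s \<Rightarrow> nat"
  assumes norm: "normalized_spine G d"
begin

lemma leafl_mem: "leafl G R g th \<Longrightarrow> g \<in> NN G \<Longrightarrow> R \<in> NN G \<and> th \<in> Th G"
proof -
  assume a: "leafl G R g th" "g \<in> NN G"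
  show ?thesis using a(1) unfolding leafl_def
  proof (elim disjE exE conjE)
    fix s n' assume b: "(R, SBin s SHole (SNt0 n')) \<in> prods G" "th = SymB s g n'"
    have "R \<in> nts1 G" "s \<in> term2 G" "n' \<in> nts0 G" using sh_l[OF norm b(1)] by auto
    then show ?thesis using a(2) b(2) unfolding Th_def NN_def
      by (auto intro!: image_eqI[of _ _ "(s, g, n')"])
  next
    fix s n' assume b: "(R, SBin s (SNt0 n') SHole) \<in> prods G" "th = SymB s n' g"
    have "R \<in> nts1 G" "s \<in> term2 G" "n' \<in> nts0 G" using sh_r[OF norm b(1)] by auto
    then show ?thesis using a(2) b(2) unfolding Th_def NN_def
      by (auto intro!: image_eqI[of _ _ "(s, n', g)"])
  qed
qed

lemma binp_mem: "binp G Z Y R \<Longrightarrow> Z \<in> NN G \<and> Y \<in> NN G \<and> R \<in> NN G"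
  unfolding binp_def NN_def using sh_bin[OF norm] by blast

lemma genB_mem: "genB G X g w \<Longrightarrow> g \<in> NN G \<Longrightarrow> set w \<subseteq> Th G \<and> X \<in> NN G"
proof (induction rule: genB.induct)
  case (gB_leaf X g th)
  then show ?case using leafl_mem by simp
next
  case (gB_bin X Y R g u v)
  then show ?case using binp_mem[OF gB_bin.hyps(1)] by simp
qed

lemma ctx_mem: "ctx G X Y g v \<Longrightarrow> X \<in> NN G \<Longrightarrow> g \<in> NN G \<Longrightarrow> set v \<subseteq> Th G \<and> Y \<in> NN G"
proof (induction rule: ctx.induct)
  case (ctx_refl A g)
  then show ?case by simp
next
  case (ctx_step X Z g v Y R u)
  then show ?case using binp_mem[OF ctx_step.hyps(2)] genB_mem[OF ctx_step.hyps(3)] by simp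
qed

lemma Qs_ctx: "th \<in> Th G \<Longrightarrow> th' \<in> Th G \<Longrightarrow> X \<in> NN G \<Longrightarrow> Y \<in> NN G \<Longrightarrow> g \<in> NN G \<Longrightarrow>
  ((Some th', th), KCtx X Y g) \<in> Qs G"
proof -
  assume a: "th \<in> Th G" "th' \<in> Th G" "X \<in> NN G" "Y \<in> NN G" "g \<in> NN G"
  have "KCtx X Y g \<in> (\<lambda>(x, y, g). KCtx x y g) ` (NN G \<times> NN G \<times> NN G)"
    by (rule image_eqI[of _ _ "(X, Y, g)"]) (use a in auto)
  then show ?thesis unfolding Qs_def Lt_def Ks_def using a by blast
qed

lemma Qs_init: "th \<in> Th G \<Longrightarrow> th' \<in> Th G \<Longrightarrow> X \<in> NN G \<Longrightarrow> Y \<in> NN G \<Longrightarrow>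
  ((Some th', th), KInit X Y) \<in> Qs G"
proof -
  assume a: "th \<in> Th G" "th' \<in> Th G" "X \<in> NN G" "Y \<in> NN G"
  have "KInit X Y \<in> (\<lambda>(b, n). KInit b n) ` (NN G \<times> NN G)"
    by (rule image_eqI[of _ _ "(X, Y)"]) (use a in auto)
  then show ?thesis unfolding Qs_def Lt_def Ks_def using a by blast
qed

lemma trans_mach: "trans (mach G) =
  {(enc G q, Some (enc G \<gamma>), None, enc G \<gamma>) | q \<gamma>. q \<in> Qs G \<and> \<gamma> \<in> Qs G \<and> apop G q \<gamma>}
       \<union> {(enc G q, None, None, enc G q') | q q'. q \<in> Qs G \<and> q' \<in> Qs G \<and> anoop G q q'}
       \<union> {(enc G q, None, Some (enc G \<gamma>), enc G q') | q \<gamma> q'. q \<in> Qs G \<and> \<gamma> \<in> Qs G \<and> q' \<in> Qs G \<and> apush G q \<gamma> q'}"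
  unfolding mach_def by (simp only: mpda.select_convs)

lemma Qs_fin: "th \<in> Th G \<Longrightarrow> ((None, th), KFin) \<in> Qs G"
  unfolding Qs_def Lt_def Ks_def by auto

lemma mk_pop: "q \<in> Qs G \<Longrightarrow> \<gamma> \<in> Qs G \<Longrightarrow> apop G q \<gamma> \<Longrightarrow>
  Wr (mach G) (enc G q) (enc G \<gamma>) [fst q] (enc G \<gamma>)"
proof -
  assume a: "q \<in> Qs G" "\<gamma> \<in> Qs G" "apop G q \<gamma>"
  then have "(enc G q, Some (enc G \<gamma>), None, enc G \<gamma>) \<in> trans (mach G)" unfolding trans_mach by blast
  from wpop[OF this] show ?thesis using out_enc[OF norm a(1)] by simp
qed

lemma mk_noop: "q \<in> Qs G \<Longrightarrow> q' \<in> Qs G \<Longrightarrow> anoop G q q' \<Longrightarrow>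
  Wr (mach G) (enc G q') g w g' \<Longrightarrow> Wr (mach G) (enc G q) g (fst q # w) g'"
proof -
  assume a: "q \<in> Qs G" "q' \<in> Qs G" "anoop G q q'" "Wr (mach G) (enc G q') g w g'"
  then have "(enc G q, None, None, enc G q') \<in> trans (mach G)" unfolding trans_mach by blast
  from wnoop[OF this a(4)] show ?thesis using out_enc[OF norm a(1)] by simp
qed

lemma mk_push: "q \<in> Qs G \<Longrightarrow> \<gamma>' \<in> Qs G \<Longrightarrow> q' \<in> Qs G \<Longrightarrow> apush G q \<gamma>' q' \<Longrightarrow>
  Wr (mach G) (enc G q') (enc G \<gamma>') w1 k2 \<Longrightarrow> Wr (mach G) k2 g w2 g' \<Longrightarrow>
  Wr (mach G) (enc G q) g (fst q # w1 @ w2) g'"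
proof -
  assume a: "q \<in> Qs G" "\<gamma>' \<in> Qs G" "q' \<in> Qs G" "apush G q \<gamma>' q'"
    "Wr (mach G) (enc G q') (enc G \<gamma>') w1 k2" "Wr (mach G) k2 g w2 g'"
  then have "(enc G q, None, Some (enc G \<gamma>'), enc G q') \<in> trans (mach G)" unfolding trans_mach by blast
  from wpush[OF this a(5) a(6)] show ?thesis using out_enc[OF norm a(1)] by simp
qed

end

context nsp
begin
lemma compl_ctx:
  "ctx G X Y g v \<Longrightarrow> v \<noteq> [] \<Longrightarrow> X \<in> NN G \<Longrightarrow> g \<in> NN G \<Longrightarrow> th \<in> Th G \<Longrightarrow> \<gamma> \<in> Qs G \<Longrightarrow>
   snd (fst \<gamma>) = last v \<Longrightarrow> (snd \<gamma> = KFin \<or> (\<exists>X' Y' g'. snd \<gamma> = KCtx X' Y' g')) \<Longrightarrow>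
   \<exists>w. Wr (mach G) (enc G ((Some (hd v), th), KCtx X Y g)) (enc G \<gamma>) w (enc G \<gamma>) \<and> map snd w = th # butlast v"
proof (induction "length v" arbitrary: X Y v th \<gamma> rule: less_induct)
  case less
  from less.prems(1) obtain Z R u v2 where c: "ctx G X Z g v2" "binp G Z Y R" "genB G R g u" "v = u @ v2"
    using less.prems(2) by (cases rule: ctx.cases) auto
  obtain R' th' u' where g: "leafl G R' g th'" "ctx G R R' g u'" "u = th' # u'"
    using genB_ctx[OF c(3)] by blast
  have mZ: "Z \<in> NN G" "Y \<in> NN G" "R \<in> NN G" using binp_mem[OF c(2)] by auto
  have mR': "R' \<in> NN G" "th' \<in> Th G" using leafl_mem[OF g(1) less.prems(4)] by auto
  have mu': "set u' \<subseteq> Th G" using ctx_mem[OF g(2) mZ(3) less.prems(4)] by auto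
  have mv2: "set v2 \<subseteq> Th G" using ctx_mem[OF c(1) less.prems(3) less.prems(4)] by auto
  have hv: "hd v = th'" using c(4) g(3) by simp
  define q where "q = ((Some (hd v), th), KCtx X Y g)"
  have qQ: "q \<in> Qs G" unfolding q_def using hv mR' less.prems(3,4,5) mZ by (intro Qs_ctx) auto
  have gam: "\<gamma> = (fst \<gamma>, snd \<gamma>)" by simp
  show ?case
  proof (cases "u' = []")
    case True
    then have RR: "R = R'" using ctx_nil g(2) by simp
    show ?thesis
    proof (cases "v2 = []")
      case True
      then have XZ: "X = Z" using ctx_nil c(1) by simp
      have lv: "last v = th'" using c(4) g(3) \<open>u' = []\<close> True by simp
      have "apop G q (fst \<gamma>, snd \<gamma>)" unfolding q_def
        using ap_ctx[of G X Y R g "fst \<gamma>" "(Some (hd v), th)" "snd \<gamma>"] c(2) g(1) RR XZ less.prems(7,8) lv hv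
        by simp
      then have "Wr (mach G) (enc G q) (enc G \<gamma>) [fst q] (enc G \<gamma>)" using mk_pop qQ less.prems(6) by simp
      moreover have "map snd [fst q] = th # butlast v" unfolding q_def using c(4) g(3) \<open>u' = []\<close> True by simp
      ultimately show ?thesis unfolding q_def by - (rule exI, rule conjI, assumption+)
    next
      case False
      define q1 where "q1 = ((Some (hd v2), th'), KCtx X Z g)"
      have q1Q: "q1 \<in> Qs G" unfolding q1_def using False mv2 mR' mZ less.prems(3,4) by (intro Qs_ctx) auto
      have "anoop G q q1" unfolding q_def q1_def using an1[OF c(2), of g "(Some (hd v2), th')"] g(1) RR hv by simp
      moreover have "length v2 < length v" using c(4) g(3) by simp
      then obtain w1 where w1: "Wr (mach G) (enc G q1) (enc G \<gamma>) w1 (enc G \<gamma>)" "map snd w1 = th' # butlast v2"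
        using less.hyps[OF _ c(1) False less.prems(3,4) mR'(2) less.prems(6) _ less.prems(8)] less.prems(7)
          c(4) False unfolding q1_def by auto
      ultimately have "Wr (mach G) (enc G q) (enc G \<gamma>) (fst q # w1) (enc G \<gamma>)" using mk_noop qQ q1Q by blast
      moreover have "map snd (fst q # w1) = th # butlast v" unfolding q_def using w1(2) c(4) g(3) \<open>u' = []\<close> False
        by simp
      ultimately show ?thesis unfolding q_def by - (rule exI, rule conjI, assumption+)
    qed
  next
    case False
    show ?thesis
    proof (cases "v2 = []")
      case True
      then have XZ: "X = Z" using ctx_nil c(1) by simp
      define q1 where "q1 = ((Some (hd u'), th'), KCtx R R' g)"
      have q1Q: "q1 \<in> Qs G" unfolding q1_def using False mu' mR' mZ less.prems(4) by (intro Qs_ctx) auto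
      have "anoop G q q1" unfolding q_def q1_def using an2[of G X Y R R' g "(Some (hd u'), th')"] c(2) XZ g(1) hv
        by simp
      moreover have "length u' < length v" using c(4) g(3) by simp
      then obtain w1 where w1: "Wr (mach G) (enc G q1) (enc G \<gamma>) w1 (enc G \<gamma>)" "map snd w1 = th' # butlast u'"
        using less.hyps[OF _ g(2) False mZ(3) less.prems(4) mR'(2) less.prems(6) _ less.prems(8)] less.prems(7)
          c(4) g(3) True False unfolding q1_def by auto
      ultimately have "Wr (mach G) (enc G q) (enc G \<gamma>) (fst q # w1) (enc G \<gamma>)" using mk_noop qQ q1Q by blast
      moreover have "map snd (fst q # w1) = th # butlast v" unfolding q_def using w1(2) c(4) g(3) True False
        by simp
      ultimately show ?thesis unfolding q_def by - (rule exI, rule conjI, assumption+)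
    next
      case v2: False
      define q1 where "q1 = ((Some (hd u'), th'), KCtx R R' g)"
      define \<gamma>' where "\<gamma>' = ((Some (hd v2), last u'), KCtx X Z g)"
      have q1Q: "q1 \<in> Qs G" unfolding q1_def using False mu' mR' mZ less.prems(4) by (intro Qs_ctx) auto
      have g'Q: "\<gamma>' \<in> Qs G" unfolding \<gamma>'_def using False v2 mu' mv2 mZ less.prems(3,4) by (intro Qs_ctx) auto
      have ap: "apush G q \<gamma>' q1" unfolding q_def q1_def \<gamma>'_def
        using apu[of G Z Y R R' g "(Some (hd u'), th')"] c(2) g(1) hv by simp
      have "length u' < length v" using c(4) g(3) by simp
      then obtain w1 where w1: "Wr (mach G) (enc G q1) (enc G \<gamma>') w1 (enc G \<gamma>')" "map snd w1 = th' # butlast u'"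
        using less.hyps[OF _ g(2) False mZ(3) less.prems(4) mR'(2) g'Q] unfolding q1_def \<gamma>'_def by auto
      have lu: "last u' \<in> Th G" using mu' False by auto
      have "length v2 < length v" using c(4) g(3) by simp
      then obtain w2 where w2: "Wr (mach G) (enc G \<gamma>') (enc G \<gamma>) w2 (enc G \<gamma>)" "map snd w2 = last u' # butlast v2"
        using less.hyps[OF _ c(1) v2 less.prems(3,4) lu less.prems(6) _ less.prems(8)] less.prems(7)
          c(4) v2 unfolding \<gamma>'_def by auto
      have "Wr (mach G) (enc G q) (enc G \<gamma>) (fst q # w1 @ w2) (enc G \<gamma>)"
        using mk_push[OF qQ g'Q q1Q ap w1(1) w2(1)] .
      moreover have "map snd (fst q # w1 @ w2) = th # butlast v" unfolding q_def
        using w1(2) w2(2) c(4) g(3) v2 False by (simp add: butlast_append)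
      ultimately show ?thesis unfolding q_def by - (rule exI, rule conjI, assumption+)
    qed
  qed
qed

end


context nsp
begin

lemma compl_init:
  "genB G b n u \<Longrightarrow> b \<in> NN G \<Longrightarrow> n \<in> NN G \<Longrightarrow> th \<in> Th G \<Longrightarrow> \<gamma> \<in> Qs G \<Longrightarrow>
   snd (fst \<gamma>) = last u \<Longrightarrow> (snd \<gamma> = KFin \<or> (\<exists>X' Y' g'. snd \<gamma> = KCtx X' Y' g')) \<Longrightarrow>
   \<exists>w. Wr (mach G) (enc G ((Some (hd u), th), KInit b n)) (enc G \<gamma>) w (enc G \<gamma>) \<and> map snd w = th # butlast u"
proof -
  assume a: "genB G b n u" "b \<in> NN G" "n \<in> NN G" "th \<in> Th G" "\<gamma> \<in> Qs G"
    "snd (fst \<gamma>) = last u" "snd \<gamma> = KFin \<or> (\<exists>X' Y' g'. snd \<gamma> = KCtx X' Y' g')"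
  obtain R' th' u' where g: "leafl G R' n th'" "ctx G b R' n u'" "u = th' # u'"
    using genB_ctx[OF a(1)] by blast
  have mR': "R' \<in> NN G" "th' \<in> Th G" using leafl_mem[OF g(1) a(3)] by auto
  have mu': "set u' \<subseteq> Th G" using ctx_mem[OF g(2) a(2) a(3)] by auto
  define q where "q = ((Some (hd u), th), KInit b n)"
  have qQ: "q \<in> Qs G" unfolding q_def using g(3) mR' a(2,3,4) by (intro Qs_init) auto
  show ?thesis
  proof (cases "u' = []")
    case True
    then have bR: "b = R'" using ctx_nil g(2) by simp
    have "apop G q (fst \<gamma>, snd \<gamma>)" unfolding q_def
      using ap_init[of G b n "fst \<gamma>" "(Some (hd u), th)" "snd \<gamma>"] g(1) bR a(6,7) g(3) True by simp
    then have "Wr (mach G) (enc G q) (enc G \<gamma>) [fst q] (enc G \<gamma>)" using mk_pop qQ a(5) by simp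
    moreover have "map snd [fst q] = th # butlast u" unfolding q_def using g(3) True by simp
    ultimately show ?thesis unfolding q_def by - (rule exI, rule conjI, assumption+)
  next
    case False
    define q1 where "q1 = ((Some (hd u'), th'), KCtx b R' n)"
    have q1Q: "q1 \<in> Qs G" unfolding q1_def using False mu' mR' a(2,3) by (intro Qs_ctx) auto
    have "anoop G q q1" unfolding q_def q1_def using an3[of G R' n "(Some (hd u'), th')"] g(1) g(3) by simp
    moreover obtain w1 where w1: "Wr (mach G) (enc G q1) (enc G \<gamma>) w1 (enc G \<gamma>)" "map snd w1 = th' # butlast u'"
      using compl_ctx[OF g(2) False a(2) a(3) mR'(2) a(5) _ a(7)] a(6) g(3) False unfolding q1_def by auto
    ultimately have "Wr (mach G) (enc G q) (enc G \<gamma>) (fst q # w1) (enc G \<gamma>)" using mk_noop qQ q1Q by blast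
    moreover have "map snd (fst q # w1) = th # butlast u" unfolding q_def using w1(2) g(3) False by simp
    ultimately show ?thesis unfolding q_def by - (rule exI, rule conjI, assumption+)
  qed
qed

lemma init_mach: "init (mach G) = enc G ` {q \<in> Qs G. \<exists>a n b. snd q = KInit b n \<and> snd (fst q) = SymA a n \<and> (n, SNt1 b (SLeaf a)) \<in> prods G}"
  unfolding mach_def by (simp only: mpda.select_convs)

lemma fin_mach: "fin (mach G) = enc G ` {q \<in> Qs G. snd q = KFin \<and> fst (fst q) = None}"
  unfolding mach_def by (simp only: mpda.select_convs)

lemma stk_mach: "stk (mach G) = enc G ` Qs G"
  unfolding mach_def by (simp only: mpda.select_convs)

end


context nsp
begin

lemma mach_lang: "mpda_lang (mach G) = next_word ` SL1 G"
proof (intro set_eqI iffI)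
  fix x assume "x \<in> mpda_lang (mach G)"
  then obtain k gk w kf where r: "x = w @ [out (mach G) kf]" "k \<in> init (mach G)" "gk \<in> stk (mach G)"
    "kf \<in> fin (mach G)" "Wr (mach G) k gk w kf"
    unfolding mpda_lang_Wr[OF no_ss[OF norm]] by blast
  obtain q \<gamma> where s: "q \<in> Qs G" "\<gamma> \<in> Qs G" "k = enc G q" "gk = enc G \<gamma>" "kf = gk" "winv G q \<gamma> w"
    using sound[OF norm r(5)] by blast
  obtain q0 a n b where q0: "q0 \<in> Qs G" "snd q0 = KInit b n" "snd (fst q0) = SymA a n"
    "(n, SNt1 b (SLeaf a)) \<in> prods G" "k = enc G q0"
    using r(2) unfolding init_mach by blast
  have qq: "q = q0" using enc_inj[OF norm q0(1) s(1)] q0(5) s(3) by simp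
  obtain \<gamma>0 where g0: "\<gamma>0 \<in> Qs G" "snd \<gamma>0 = KFin" "fst (fst \<gamma>0) = None" "kf = enc G \<gamma>0"
    using r(4) unfolding fin_mach by blast
  have gg: "\<gamma> = \<gamma>0" using enc_inj[OF norm g0(1) s(2)] g0(4) s(4,5) by simp
  have o: "out (mach G) kf = fst \<gamma>" using out_enc[OF norm s(2)] s(4,5) by simp
  have w: "w \<noteq> []" "hd w = fst q" "lnk w (Some (snd (fst \<gamma>)))"
    "genB G b n (map snd (tl w) @ [snd (fst \<gamma>)])"
    using s(6) qq q0(2) unfolding winv_def by auto
  define u where "u = map snd (tl w) @ [snd (fst \<gamma>)]"
  have inS: "SymA a n # u \<in> SL1 G" unfolding SL1_def u_def using q0(4) w(4) by blast
  have l: "lnk (w @ [fst \<gamma>]) None" using lnk_append[of "[fst \<gamma>]" w None] w(3) g0(3) gg by simp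
  have ms: "map snd (w @ [fst \<gamma>]) = SymA a n # u" unfolding u_def
    using w(1,2) qq q0(3) by (cases w) auto
  have "x = next_word (SymA a n # u)"
    using nw_unique[OF l] ms r(1) o by (simp add: next_word_nw)
  then show "x \<in> next_word ` SL1 G" using inS by blast
next
  fix x assume "x \<in> next_word ` SL1 G"
  then obtain a n b u where x: "x = next_word (SymA a n # u)" "(n, SNt1 b (SLeaf a)) \<in> prods G" "genB G b n u"
    unfolding SL1_def by blast
  have m0: "n \<in> nts0 G \<and> b \<in> nts1 G \<and> a \<in> term0 G" by (rule sh_un[OF norm x(2)])
  have m: "n \<in> NN G" "b \<in> NN G" "a \<in> term0 G" using m0 unfolding NN_def by simp_all
  have "(a, n) \<in> term0 G \<times> NN G" using m by simp
  then have "(\<lambda>(a, n). SymA a n) (a, n) \<in> (\<lambda>(a, n). SymA a n) ` (term0 G \<times> NN G)" by (rule imageI)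
  then have tha: "SymA a n \<in> Th G" unfolding Th_def by (intro UnI1) simp
  have un: "u \<noteq> []" by (rule genB_ne[OF x(3)])
  have mu: "set u \<subseteq> Th G" using genB_mem[OF x(3) m(1)] by simp
  have hl: "hd u \<in> Th G" "last u \<in> Th G" using un mu by auto
  define q0 where "q0 = ((Some (hd u), SymA a n :: ('n, 'a, 's) sym), KInit b n)"
  define \<gamma>0 where "\<gamma>0 = ((None :: ('n, 'a, 's) sym option, last u), KFin :: 'n kd)"
  have q0Q: "q0 \<in> Qs G" unfolding q0_def using tha hl m by (intro Qs_init) auto
  have g0Q: "\<gamma>0 \<in> Qs G" unfolding \<gamma>0_def using hl by (intro Qs_fin) auto
  have ex: "\<exists>w. Wr (mach G) (enc G q0) (enc G \<gamma>0) w (enc G \<gamma>0) \<and> map snd w = SymA a n # butlast u"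
    unfolding q0_def using compl_init[OF x(3) m(2) m(1) tha g0Q] unfolding \<gamma>0_def by simp
  then obtain w where wc: "Wr (mach G) (enc G q0) (enc G \<gamma>0) w (enc G \<gamma>0) \<and> map snd w = SymA a n # butlast u"
    by (rule exE)
  note w = conjunct1[OF wc] conjunct2[OF wc]
  obtain q \<gamma> where s: "q \<in> Qs G" "\<gamma> \<in> Qs G" "enc G q0 = enc G q" "enc G \<gamma>0 = enc G \<gamma>" "winv G q \<gamma> w"
    using sound[OF norm w(1)] by blast
  have e: "q = q0" "\<gamma> = \<gamma>0" using enc_inj[OF norm q0Q s(1)] enc_inj[OF norm g0Q s(2)] s(3,4) by simp_all
  have lw: "lnk w (Some (last u))" using s(5) e unfolding winv_def \<gamma>0_def by simp
  have l: "lnk (w @ [(None, last u)]) None" using lnk_append[of "[(None, last u)]" w None] lw by simp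
  have ms: "map snd (w @ [(None, last u)]) = SymA a n # u" using w(2) un by simp
  have xe: "x = w @ [(None, last u)]" using nw_unique[OF l] ms x(1) by (simp add: next_word_nw)
  have "q0 \<in> Qs G \<and> (\<exists>a' n' b'. snd q0 = KInit b' n' \<and> snd (fst q0) = SymA a' n' \<and> (n', SNt1 b' (SLeaf a')) \<in> prods G)"
    using q0Q x(2) unfolding q0_def by (intro conjI exI[of _ a] exI[of _ n] exI[of _ b]) simp_all
  then have "enc G q0 \<in> init (mach G)" unfolding init_mach by blast
  moreover have "enc G \<gamma>0 \<in> stk (mach G)" unfolding stk_mach using g0Q by blast
  moreover have "\<gamma>0 \<in> {q \<in> Qs G. snd q = KFin \<and> fst (fst q) = None}" using g0Q unfolding \<gamma>0_def by simp
  then have "enc G \<gamma>0 \<in> fin (mach G)" unfolding fin_mach by blast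
  moreover have "out (mach G) (enc G \<gamma>0) = (None, last u)" using out_enc[OF norm g0Q] unfolding \<gamma>0_def by simp
  ultimately show "x \<in> mpda_lang (mach G)" unfolding mpda_lang_Wr[OF no_ss[OF norm]] mem_Collect_eq
    by (intro exI[of _ "enc G q0"] exI[of _ "enc G \<gamma>0"] exI[of _ w] exI[of _ "enc G \<gamma>0"]) (use xe w(1) in simp)
qed

end


context nsp
begin

lemma mach_union: "mpda_lang (mach G) \<union> {w \<in> Next (spine_lang G). length w = 1} = Next (spine_lang G)"
proof -
  have len: "length (next_word x) = length x" for x :: "('n, 'a, 's) sym list" by (simp add: next_word_nw)
  have l0: "x \<in> SL0 G \<Longrightarrow> length x = 1" for x unfolding SL0_def by auto
  have l1: "x \<in> SL1 G \<Longrightarrow> length x \<noteq> 1" for x unfolding SL1_def using genB_ne by fastforce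
  have N: "Next (spine_lang G) = next_word ` SL0 G \<union> next_word ` SL1 G"
    unfolding Next_def spine_lang_char[OF norm] by auto
  have "{w \<in> Next (spine_lang G). length w = 1} = next_word ` SL0 G"
    unfolding N using len l0 l1 by auto
  then show ?thesis unfolding mach_lang N by auto
qed

lemma mach_mpda: "is_mpda (mach G)"
proof -
  have f: "finite (Qs G)" "finite (Lt G)" using finite_Qs[OF norm] finite_Lt[OF norm] by auto
  have t: "trans (mach G) \<subseteq> states (mach G) \<times> insert None (Some ` stk (mach G)) \<times> insert None (Some ` stk (mach G)) \<times> states (mach G)"
    unfolding trans_mach by (auto simp: mach_def)
  have o: "out (mach G) ` states (mach G) \<subseteq> inp (mach G)"
  proof
    fix y assume "y \<in> out (mach G) ` states (mach G)"
    then obtain q where "q \<in> Qs G" "y = out (mach G) (enc G q)" unfolding mach_def by auto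
    then show "y \<in> inp (mach G)" using out_enc[OF norm] unfolding mach_def Qs_def by auto
  qed
  show ?thesis unfolding is_mpda_def using f t o no_ss[OF norm] by (auto simp: mach_def)
qed

lemma mach_pop: "pop_normalized (mach G)"
  unfolding pop_normalized_def
  by (intro exI[of _ id]) (auto simp: trans_mach stk_mach mach_def)

end


section \<open>Trees of the grammar\<close>

inductive tn :: "('n, 'a, 's) spine_grammar \<Rightarrow> 'n \<Rightarrow> ('a, 's) btree \<Rightarrow> bool"
  and tu :: "('n, 'a, 's) spine_grammar \<Rightarrow> 'n \<Rightarrow> ('a, 's) btree \<Rightarrow> ('a, 's) btree \<Rightarrow> bool"
  for G where
  tn_leaf: "(n, SLeaf a) \<in> prods G \<Longrightarrow> tn G n (Leaf a)"
| tn_un: "(n, SNt1 b (SLeaf a)) \<in> prods G \<Longrightarrow> tu G b (Leaf a) t \<Longrightarrow> tn G n t"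
| tu_bin: "(b, SNt1 c1 (SNt1 c2 SHole)) \<in> prods G \<Longrightarrow> tu G c2 x y \<Longrightarrow> tu G c1 y t \<Longrightarrow> tu G b x t"
| tu_l: "(b, SBin s SHole (SNt0 n')) \<in> prods G \<Longrightarrow> tn G n' t2 \<Longrightarrow> tu G b x (Node s x t2)"
| tu_r: "(b, SBin s (SNt0 n') SHole) \<in> prods G \<Longrightarrow> tn G n' t1 \<Longrightarrow> tu G b x (Node s t1 x)"

fun den :: "('n, 'a, 's) spine_grammar \<Rightarrow> ('n, 'a, 's) sf \<Rightarrow> ('a, 's) btree \<Rightarrow> bool" where
  "den G SHole t = False"
| "den G (SNt0 n) t = tn G n t"
| "den G (SNt1 b u) t = (\<exists>x. den G u x \<and> tu G b x t)"
| "den G (SLeaf a) t = (t = Leaf a)"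
| "den G (SBin s l r) t = (\<exists>tl tr. t = Node s tl tr \<and> den G l tl \<and> den G r tr)"

lemma den_of_tree: "den G (of_tree t) t"
  by (induction t) auto

context nsp
begin

lemma gstep_den: "gstep (nts0 G) (nts1 G) (prods G) u u' \<Longrightarrow> den G u' t \<Longrightarrow> den G u t"
proof (induction arbitrary: t rule: gstep.induct)
  case (nullary n r)
  have dj: "n \<notin> nts1 G" using nullary.hyps(2) disj01[OF norm] by blast
  from shapes[OF norm nullary.hyps(1)] dj show ?case
  proof (elim disjE conjE bexE)
    fix a assume "r = SLeaf a"
    then show ?thesis using nullary tn_leaf by auto
  next
    fix b a assume r: "r = SNt1 b (SLeaf a)"
    then obtain x where "x = Leaf a" "tu G b x t" using nullary.prems by auto
    then show ?thesis using nullary.hyps(1) r tn_un by auto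
  qed auto
next
  case (unary n r t0)
  have dj: "n \<notin> nts0 G" using unary.hyps(2) disj01[OF norm] by blast
  from shapes[OF norm unary.hyps(1)] dj show ?case
  proof (elim disjE conjE bexE)
    fix b1 b2 assume r: "r = SNt1 b1 (SNt1 b2 SHole)"
    then obtain y x where "den G t0 x" "tu G b2 x y" "tu G b1 y t" using unary.prems by auto
    then show ?thesis using unary.hyps(1) r tu_bin by fastforce
  next
    fix s a assume r: "r = SBin s SHole (SNt0 a)"
    then obtain x t2 where "t = Node s x t2" "den G t0 x" "tn G a t2" using unary.prems by auto
    then show ?thesis using unary.hyps(1) r tu_l by fastforce
  next
    fix s a assume r: "r = SBin s (SNt0 a) SHole"
    then obtain x t1 where "t = Node s t1 x" "den G t0 x" "tn G a t1" using unary.prems by auto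
    then show ?thesis using unary.hyps(1) r tu_r by fastforce
  qed auto
next
  case (cong1 t t' b)
  then show ?case by auto
next
  case (congl l l' s r)
  then show ?case by fastforce
next
  case (congr r r' s l)
  then show ?case by fastforce
qed

lemma steps_den: "(gstep (nts0 G) (nts1 G) (prods G))\<^sup>*\<^sup>* u v \<Longrightarrow> den G v t \<Longrightarrow> den G u t"
  by (induction rule: rtranclp_induct) (auto intro: gstep_den)

lemma steps_cong1: "(gstep N0 N1 P)\<^sup>*\<^sup>* u v \<Longrightarrow> (gstep N0 N1 P)\<^sup>*\<^sup>* (SNt1 b u) (SNt1 b v)"
  by (induction rule: rtranclp_induct) (auto intro: rtranclp.rtrancl_into_rtrancl gstep.cong1)

lemma steps_congl: "(gstep N0 N1 P)\<^sup>*\<^sup>* u v \<Longrightarrow> (gstep N0 N1 P)\<^sup>*\<^sup>* (SBin s u r) (SBin s v r)"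
  by (induction rule: rtranclp_induct) (auto intro: rtranclp.rtrancl_into_rtrancl gstep.congl)

lemma steps_congr: "(gstep N0 N1 P)\<^sup>*\<^sup>* u v \<Longrightarrow> (gstep N0 N1 P)\<^sup>*\<^sup>* (SBin s l u) (SBin s l v)"
  by (induction rule: rtranclp_induct) (auto intro: rtranclp.rtrancl_into_rtrancl gstep.congr)

lemma tn_steps:
  "tn G n t \<Longrightarrow> (gstep (nts0 G) (nts1 G) (prods G))\<^sup>*\<^sup>* (SNt0 n) (of_tree t)"
  "tu G b x t \<Longrightarrow> (gstep (nts0 G) (nts1 G) (prods G))\<^sup>*\<^sup>* (SNt1 b (of_tree x)) (of_tree t)"
proof (induct rule: tn_tu.inducts)
  case (tn_leaf n a)
  have "n \<in> nts0 G" using sh_leaf[OF norm tn_leaf] by simp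
  then show ?case using gstep.nullary[OF tn_leaf] by auto
next
  case (tn_un n b a t)
  have "n \<in> nts0 G" using sh_un[OF norm tn_un(1)] by simp
  then have "gstep (nts0 G) (nts1 G) (prods G) (SNt0 n) (SNt1 b (of_tree (Leaf a)))"
    using gstep.nullary[OF tn_un(1)] by simp
  then show ?case using tn_un(3) by (rule converse_rtranclp_into_rtranclp)
next
  case (tu_bin b c1 c2 x y t)
  have "b \<in> nts1 G" using sh_bin[OF norm tu_bin(1)] by simp
  then have "gstep (nts0 G) (nts1 G) (prods G) (SNt1 b (of_tree x)) (SNt1 c1 (SNt1 c2 (of_tree x)))"
    using gstep.unary[OF tu_bin(1), where t = "of_tree x"] by simp
  moreover have "(gstep (nts0 G) (nts1 G) (prods G))\<^sup>*\<^sup>* (SNt1 c1 (SNt1 c2 (of_tree x))) (SNt1 c1 (of_tree y))"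
    using steps_cong1[OF tu_bin(3)] .
  ultimately show ?case using tu_bin(5) by (meson converse_rtranclp_into_rtranclp rtranclp_trans)
next
  case (tu_l b s n' t2 x)
  have "b \<in> nts1 G" using sh_l[OF norm tu_l(1)] by simp
  then have "gstep (nts0 G) (nts1 G) (prods G) (SNt1 b (of_tree x)) (SBin s (of_tree x) (SNt0 n'))"
    using gstep.unary[OF tu_l(1), where t = "of_tree x"] by simp
  moreover have "(gstep (nts0 G) (nts1 G) (prods G))\<^sup>*\<^sup>* (SBin s (of_tree x) (SNt0 n')) (SBin s (of_tree x) (of_tree t2))"
    using steps_congr[OF tu_l(3)] .
  ultimately show ?case by (simp add: converse_rtranclp_into_rtranclp)
next
  case (tu_r b s n' t1 x)
  have "b \<in> nts1 G" using sh_r[OF norm tu_r(1)] by simp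
  then have "gstep (nts0 G) (nts1 G) (prods G) (SNt1 b (of_tree x)) (SBin s (SNt0 n') (of_tree x))"
    using gstep.unary[OF tu_r(1), where t = "of_tree x"] by simp
  moreover have "(gstep (nts0 G) (nts1 G) (prods G))\<^sup>*\<^sup>* (SBin s (SNt0 n') (of_tree x)) (SBin s (of_tree t1) (of_tree x))"
    using steps_congl[OF tu_r(3)] .
  ultimately show ?case by (simp add: converse_rtranclp_into_rtranclp)
qed

lemma tree_lang_tn: "tree_lang G = {t. tn G (start G) t}"
proof (intro set_eqI iffI)
  fix t assume "t \<in> tree_lang G"
  then have "(gstep (nts0 G) (nts1 G) (prods G))\<^sup>*\<^sup>* (SNt0 (start G)) (of_tree t)"
    unfolding tree_lang_def grammar_step_def by simp
  from steps_den[OF this den_of_tree] show "t \<in> {t. tn G (start G) t}" by simp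
next
  fix t assume "t \<in> {t. tn G (start G) t}"
  then show "t \<in> tree_lang G" using tn_steps(1) unfolding tree_lang_def grammar_step_def by simp
qed

end


section \<open>Tree assembly\<close>

lemma attach_rev_mono: "T \<subseteq> T' \<Longrightarrow> attach_rev d T w \<subseteq> attach_rev d T' w"
proof (induction d T w rule: attach_rev.induct)
  case (5 d T s' s n1 n2 y ys)
  have ih: "attach_rev d T (y # ys) \<subseteq> attach_rev d T' (y # ys)" using 5 by blast
  show ?case
  proof
    fix t assume "t \<in> attach_rev d T ((s', SymB s n1 n2) # y # ys)"
    then obtain t1 t2 where t: "t = Node ((s', s), n1, n2) t1 t2"
      "if d s = 1 then t1 \<in> attach_rev d T (y # ys) \<and> t2 \<in> T \<and> tgen d t2 = n2
        else t2 \<in> attach_rev d T (y # ys) \<and> t1 \<in> T \<and> tgen d t1 = n1" by auto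
    then have "if d s = 1 then t1 \<in> attach_rev d T' (y # ys) \<and> t2 \<in> T' \<and> tgen d t2 = n2
        else t2 \<in> attach_rev d T' (y # ys) \<and> t1 \<in> T' \<and> tgen d t1 = n1"
      using ih 5(3) by (auto split: if_splits)
    then show "t \<in> attach_rev d T' ((s', SymB s n1 n2) # y # ys)" using t(1) by auto
  qed
qed auto

lemma attach_mono: "T \<subseteq> T' \<Longrightarrow> attach d T w \<subseteq> attach d T' w"
  unfolding attach_def by (rule attach_rev_mono)

lemma Fcal_least: "(\<forall>w\<in>L. attach d F w \<subseteq> F) \<Longrightarrow> Fcal d L \<subseteq> F"
  unfolding Fcal_def by blast

lemma Fcal_closed: "w \<in> L \<Longrightarrow> attach d (Fcal d L) w \<subseteq> Fcal d L"
proof -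
  assume w: "w \<in> L"
  have "attach d (Fcal d L) w \<subseteq> F" if F: "\<forall>w\<in>L. attach d F w \<subseteq> F" for F
  proof -
    have "Fcal d L \<subseteq> F" using Fcal_least[OF F] .
    then have "attach d (Fcal d L) w \<subseteq> attach d F w" by (rule attach_mono)
    then show ?thesis using F w by blast
  qed
  then have "attach d (Fcal d L) w \<subseteq> \<Inter> {F. \<forall>w\<in>L. attach d F w \<subseteq> F}" by (intro Inter_greatest) blast
  then show ?thesis by (simp only: Fcal_def[symmetric])
qed

lemma attach_leaf: "attach d T (nw [SymA a n] e) = {Leaf ((e, a), n)}"
  unfolding attach_def by simp

lemma attach_node:
  assumes "p \<noteq> []"
  shows "attach d T (nw (p @ [SymB s n1 n2]) e) =
    {Node ((e, s), n1, n2) t1 t2 | t1 t2.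
        if d s = 1 then t1 \<in> attach d T (nw p (Some (SymB s n1 n2))) \<and> t2 \<in> T \<and> tgen d t2 = n2
        else t2 \<in> attach d T (nw p (Some (SymB s n1 n2))) \<and> t1 \<in> T \<and> tgen d t1 = n1}"
proof -
  have e: "nw (p @ [SymB s n1 n2]) e = nw p (Some (SymB s n1 n2)) @ [(e, SymB s n1 n2)]"
    using nw_append[of "[SymB s n1 n2]" p e] by simp
  have "rev (nw p (Some (SymB s n1 n2))) \<noteq> []" using assms by (simp add: nw_def)
  then obtain y ys where r: "rev (nw p (Some (SymB s n1 n2))) = y # ys"
    by (cases "rev (nw p (Some (SymB s n1 n2)))") auto
  have "attach d T (nw p (Some (SymB s n1 n2))) = attach_rev d T (y # ys)" unfolding attach_def r ..
  then show ?thesis unfolding attach_def e using r by simp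
qed

definition rl :: "('n, 'a, 's) ftree \<Rightarrow> ('a, 's) btree" where
  "rl = map_btree (\<lambda>x. snd (fst x)) (\<lambda>x. snd (fst x))"

lemma rl_simps[simp]: "rl (Leaf x) = Leaf (snd (fst x))" "rl (Node y l r) = Node (snd (fst y)) (rl l) (rl r)"
  unfolding rl_def by simp_all


context nsp
begin

lemma I_u:
  "genB G b g u \<Longrightarrow> p \<noteq> [] \<Longrightarrow> t' \<in> attach d F (nw (p @ u) e) \<Longrightarrow> F \<subseteq> {t. tn G (tgen d t) (rl t)} \<Longrightarrow>
   (\<exists>tx \<in> attach d F (nw p (Some (hd u))). tu G b (rl tx) (rl t')) \<and> tgen d t' = g"
proof (induction arbitrary: p e t' rule: genB.induct)
  case (gB_leaf X g th)
  from gB_leaf.hyps show ?case unfolding leafl_def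
  proof (elim disjE exE conjE)
    fix s n' assume a: "(X, SBin s SHole (SNt0 n')) \<in> prods G" "th = SymB s g n'"
    have ds: "d s = 1" using sh_l[OF norm a(1)] by simp
    have "t' \<in> {Node ((e, s), g, n') t1 t2 | t1 t2.
        if d s = 1 then t1 \<in> attach d F (nw p (Some (SymB s g n'))) \<and> t2 \<in> F \<and> tgen d t2 = n'
        else t2 \<in> attach d F (nw p (Some (SymB s g n'))) \<and> t1 \<in> F \<and> tgen d t1 = g}"
      using gB_leaf.prems(2) unfolding a(2) attach_node[OF gB_leaf.prems(1)] by simp
    then obtain t1 t2 where t0: "t' = Node ((e, s), g, n') t1 t2" "if d s = 1 then t1 \<in> attach d F (nw p (Some (SymB s g n'))) \<and> t2 \<in> F \<and> tgen d t2 = n'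
        else t2 \<in> attach d F (nw p (Some (SymB s g n'))) \<and> t1 \<in> F \<and> tgen d t1 = g" by blast
    have t: "t1 \<in> attach d F (nw p (Some th))" "t2 \<in> F" "tgen d t2 = n'" using t0(2) ds a(2) by simp_all
    have "tn G n' (rl t2)" using gB_leaf.prems(3) t(2,3) by auto
    then have tu: "tu G X (rl t1) (rl t')" using tu_l[OF a(1)] t0(1) by simp
    have tg: "tgen d t' = g" using t0(1) ds by simp
    show ?thesis using t(1) tu tg by (intro conjI bexI[of _ t1]) simp_all
  next
    fix s n' assume a: "(X, SBin s (SNt0 n') SHole) \<in> prods G" "th = SymB s n' g"
    have ds: "d s = 2" using sh_r[OF norm a(1)] by simp
    have "t' \<in> {Node ((e, s), n', g) t1 t2 | t1 t2.
        if d s = 1 then t1 \<in> attach d F (nw p (Some (SymB s n' g))) \<and> t2 \<in> F \<and> tgen d t2 = g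
        else t2 \<in> attach d F (nw p (Some (SymB s n' g))) \<and> t1 \<in> F \<and> tgen d t1 = n'}"
      using gB_leaf.prems(2) unfolding a(2) attach_node[OF gB_leaf.prems(1)] by simp
    then obtain t1 t2 where t0: "t' = Node ((e, s), n', g) t1 t2" "if d s = 1 then t1 \<in> attach d F (nw p (Some (SymB s n' g))) \<and> t2 \<in> F \<and> tgen d t2 = g
        else t2 \<in> attach d F (nw p (Some (SymB s n' g))) \<and> t1 \<in> F \<and> tgen d t1 = n'" by blast
    have t: "t2 \<in> attach d F (nw p (Some th))" "t1 \<in> F" "tgen d t1 = n'" using t0(2) ds a(2) by simp_all
    have "tn G n' (rl t1)" using gB_leaf.prems(3) t(2,3) by auto
    then have tu: "tu G X (rl t2) (rl t')" using tu_r[OF a(1)] t0(1) by simp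
    have tg: "tgen d t' = g" using t0(1) ds by simp
    show ?thesis using t(1) tu tg by (intro conjI bexI[of _ t2]) simp_all
  qed
next
  case (gB_bin X Y R g u1 u2)
  have u1: "u1 \<noteq> []" by (rule genB_ne[OF gB_bin.hyps(2)])
  have pu: "p @ u1 \<noteq> []" using gB_bin.prems(1) by simp
  have "t' \<in> attach d F (nw ((p @ u1) @ u2) e)" using gB_bin.prems(2) by simp
  from gB_bin.IH(2)[OF pu this gB_bin.prems(3)] obtain ty where
    ty: "ty \<in> attach d F (nw (p @ u1) (Some (hd u2)))" "tu G R (rl ty) (rl t')" and tg: "tgen d t' = g"
    by blast
  from gB_bin.IH(1)[OF gB_bin.prems(1) ty(1) gB_bin.prems(3)] obtain tx where
    tx: "tx \<in> attach d F (nw p (Some (hd u1)))" "tu G Y (rl tx) (rl ty)"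
    by blast
  have pr: "(X, SNt1 R (SNt1 Y SHole)) \<in> prods G" using gB_bin.hyps(1) unfolding binp_def .
  have tu: "tu G X (rl tx) (rl t')" by (rule tu_bin[OF pr tx(2) ty(2)])
  have "tx \<in> attach d F (nw p (Some (hd (u1 @ u2))))" using tx(1) u1 by simp
  then show ?case using tu tg by (intro conjI bexI[of _ tx]) simp_all
qed

end


context nsp
begin

lemma Fcal_sub: "Fcal d (Next (spine_lang G)) \<subseteq> {t. tn G (tgen d t) (rl t)}"
proof (rule Fcal_least, rule ballI)
  fix w assume "w \<in> Next (spine_lang G)"
  then obtain x where x: "w = nw x None" "x \<in> SL0 G \<union> SL1 G"
    unfolding Next_def spine_lang_char[OF norm] next_word_nw by blast
  show "attach d {t. tn G (tgen d t) (rl t)} w \<subseteq> {t. tn G (tgen d t) (rl t)}"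
  proof
    fix t assume t: "t \<in> attach d {t. tn G (tgen d t) (rl t)} w"
    from x(2) show "t \<in> {t. tn G (tgen d t) (rl t)}"
    proof
      assume "x \<in> SL0 G"
      then obtain a n where an: "x = [SymA a n]" "(n, SLeaf a) \<in> prods G" unfolding SL0_def by blast
      have "t \<in> {Leaf ((None, a), n)}" using t unfolding x(1) an(1) attach_leaf .
      then have "t = Leaf ((None, a), n)" by simp
      then show ?thesis using tn_leaf[OF an(2)] by simp
    next
      assume "x \<in> SL1 G"
      then obtain a n b u where xx: "x = SymA a n # u" "(n, SNt1 b (SLeaf a)) \<in> prods G" "genB G b n u"
        unfolding SL1_def by blast
      have tt: "t \<in> attach d {t. tn G (tgen d t) (rl t)} (nw ([SymA a n] @ u) None)" using t x(1) xx(1) by simp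
      have iu: "(\<exists>tx \<in> attach d {t. tn G (tgen d t) (rl t)} (nw [SymA a n] (Some (hd u))). tu G b (rl tx) (rl t)) \<and> tgen d t = n"
        by (rule I_u[OF xx(3) _ tt]) simp_all
      then obtain tx where tx: "tx \<in> attach d {t. tn G (tgen d t) (rl t)} (nw [SymA a n] (Some (hd u)))"
        "tu G b (rl tx) (rl t)" by blast
      have "tx = Leaf ((Some (hd u), a), n)" using tx(1) unfolding attach_leaf by simp
      then have "tn G n (rl t)" using tn_un[OF xx(2)] tx(2) by simp
      then show ?thesis using iu by simp
    qed
  qed
qed

end


context nsp
begin

abbreviation "FF \<equiv> Fcal d (Next (spine_lang G))"

lemma Fc: "x \<in> spine_lang G \<Longrightarrow> attach d FF (nw x None) \<subseteq> FF"
proof -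
  assume "x \<in> spine_lang G"
  then have "nw x None \<in> Next (spine_lang G)" unfolding Next_def next_word_nw by blast
  then show ?thesis by (rule Fcal_closed)
qed

lemma II:
  "tn G n t \<Longrightarrow> \<exists>t' \<in> FF. tgen d t' = n \<and> rl t' = t"
  "tu G b x t \<Longrightarrow> \<forall>g. \<exists>u. genB G b g u \<and> (\<forall>p e tx. p \<noteq> [] \<longrightarrow>
      tx \<in> attach d FF (nw p (Some (hd u))) \<longrightarrow> rl tx = x \<longrightarrow>
      (\<exists>t' \<in> attach d FF (nw (p @ u) e). rl t' = t \<and> tgen d t' = g))"
proof (induct rule: tn_tu.inducts)
  case (tn_leaf n a)
  have "[SymA a n] \<in> spine_lang G" unfolding spine_lang_char[OF norm] SL0_def using tn_leaf by blast
  from Fc[OF this] have "Leaf ((None, a), n) \<in> FF" unfolding attach_leaf by simp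
  then show ?case by (intro bexI[of _ "Leaf ((None, a), n)"]) simp_all
next
  case (tn_un n b a t)
  obtain u where u: "genB G b n u" "\<forall>p e tx. p \<noteq> [] \<longrightarrow>
      tx \<in> attach d FF (nw p (Some (hd u))) \<longrightarrow> rl tx = Leaf a \<longrightarrow>
      (\<exists>t' \<in> attach d FF (nw (p @ u) e). rl t' = t \<and> tgen d t' = n)"
    using tn_un(3) by blast
  have lf: "Leaf ((Some (hd u), a), n) \<in> attach d FF (nw [SymA a n] (Some (hd u)))"
    unfolding attach_leaf by simp
  have "\<exists>t' \<in> attach d FF (nw ([SymA a n] @ u) None). rl t' = t \<and> tgen d t' = n"
    using u(2)[rule_format, of "[SymA a n]" "Leaf ((Some (hd u), a), n)" None] lf by simp
  then obtain t' where t': "t' \<in> attach d FF (nw ([SymA a n] @ u) None)" "rl t' = t" "tgen d t' = n"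
    by blast
  have "SymA a n # u \<in> spine_lang G" unfolding spine_lang_char[OF norm] SL1_def using tn_un(1) u(1) by blast
  from Fc[OF this] have "t' \<in> FF" using t'(1) by auto
  then show ?case using t'(2,3) by (intro bexI[of _ t']) simp_all
next
  case (tu_bin b c1 c2 x y t)
  show ?case
  proof
    fix g
    obtain u2 where u2: "genB G c2 g u2" "\<forall>p e tx. p \<noteq> [] \<longrightarrow>
      tx \<in> attach d FF (nw p (Some (hd u2))) \<longrightarrow> rl tx = x \<longrightarrow>
      (\<exists>t' \<in> attach d FF (nw (p @ u2) e). rl t' = y \<and> tgen d t' = g)"
      using tu_bin(3) by blast
    obtain u1 where u1: "genB G c1 g u1" "\<forall>p e tx. p \<noteq> [] \<longrightarrow>
      tx \<in> attach d FF (nw p (Some (hd u1))) \<longrightarrow> rl tx = y \<longrightarrow>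
      (\<exists>t' \<in> attach d FF (nw (p @ u1) e). rl t' = t \<and> tgen d t' = g)"
      using tu_bin(5) by blast
    have bp: "binp G b c2 c1" using tu_bin(1) unfolding binp_def .
    have gb: "genB G b g (u2 @ u1)" by (rule gB_bin[OF bp u2(1) u1(1)])
    have ne: "u2 \<noteq> []" by (rule genB_ne[OF u2(1)])
    have "\<forall>p e tx. p \<noteq> [] \<longrightarrow>
      tx \<in> attach d FF (nw p (Some (hd (u2 @ u1)))) \<longrightarrow> rl tx = x \<longrightarrow>
      (\<exists>t' \<in> attach d FF (nw (p @ (u2 @ u1)) e). rl t' = t \<and> tgen d t' = g)"
    proof (intro allI impI)
      fix p e tx assume a: "p \<noteq> []" "tx \<in> attach d FF (nw p (Some (hd (u2 @ u1))))" "rl tx = x"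
      have a2: "tx \<in> attach d FF (nw p (Some (hd u2)))" using a(2) ne by simp
      have "\<exists>t' \<in> attach d FF (nw (p @ u2) (Some (hd u1))). rl t' = y \<and> tgen d t' = g"
        using u2(2)[rule_format, OF a(1) a2 a(3)] .
      then obtain ty where ty: "ty \<in> attach d FF (nw (p @ u2) (Some (hd u1)))" "rl ty = y" by blast
      have pu: "p @ u2 \<noteq> []" using a(1) by simp
      have "\<exists>t' \<in> attach d FF (nw ((p @ u2) @ u1) e). rl t' = t \<and> tgen d t' = g"
        using u1(2)[rule_format, OF pu ty(1) ty(2)] .
      then show "\<exists>t' \<in> attach d FF (nw (p @ (u2 @ u1)) e). rl t' = t \<and> tgen d t' = g" by simp
    qed
    then show "\<exists>u. genB G b g u \<and> (\<forall>p e tx. p \<noteq> [] \<longrightarrow>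
      tx \<in> attach d FF (nw p (Some (hd u))) \<longrightarrow> rl tx = x \<longrightarrow>
      (\<exists>t' \<in> attach d FF (nw (p @ u) e). rl t' = t \<and> tgen d t' = g))"
      using gb by (intro exI[of _ "u2 @ u1"] conjI)
  qed
next
  case (tu_l b s n' t2 x)
  have ds: "d s = 1" using sh_l[OF norm tu_l(1)] by simp
  obtain t2' where t2': "t2' \<in> FF" "tgen d t2' = n'" "rl t2' = t2" using tu_l(3) by blast
  show ?case
  proof
    fix g
    have gb: "genB G b g [SymB s g n']" using tu_l(1) by (intro gB_leaf) (auto simp: leafl_def)
    have "\<forall>p e tx. p \<noteq> [] \<longrightarrow>
      tx \<in> attach d FF (nw p (Some (hd [SymB s g n']))) \<longrightarrow> rl tx = x \<longrightarrow>
      (\<exists>t' \<in> attach d FF (nw (p @ [SymB s g n']) e). rl t' = Node s x t2 \<and> tgen d t' = g)"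
    proof (intro allI impI)
      fix p e tx assume a: "p \<noteq> []" "tx \<in> attach d FF (nw p (Some (hd [SymB s g n'])))" "rl tx = x"
      have "Node ((e, s), g, n') tx t2' \<in> attach d FF (nw (p @ [SymB s g n']) e)"
        unfolding attach_node[OF a(1)] using a(2) t2' ds by simp
      then show "\<exists>t' \<in> attach d FF (nw (p @ [SymB s g n']) e). rl t' = Node s x t2 \<and> tgen d t' = g"
        using a(3) t2' ds by (intro bexI[of _ "Node ((e, s), g, n') tx t2'"]) simp_all
    qed
    then show "\<exists>u. genB G b g u \<and> (\<forall>p e tx. p \<noteq> [] \<longrightarrow>
      tx \<in> attach d FF (nw p (Some (hd u))) \<longrightarrow> rl tx = x \<longrightarrow>
      (\<exists>t' \<in> attach d FF (nw (p @ u) e). rl t' = Node s x t2 \<and> tgen d t' = g))"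
      using gb by (intro exI[of _ "[SymB s g n']"] conjI)
  qed
next
  case (tu_r b s n' t1 x)
  have ds: "d s = 2" using sh_r[OF norm tu_r(1)] by simp
  obtain t1' where t1': "t1' \<in> FF" "tgen d t1' = n'" "rl t1' = t1" using tu_r(3) by blast
  show ?case
  proof
    fix g
    have gb: "genB G b g [SymB s n' g]" using tu_r(1) by (intro gB_leaf) (auto simp: leafl_def)
    have "\<forall>p e tx. p \<noteq> [] \<longrightarrow>
      tx \<in> attach d FF (nw p (Some (hd [SymB s n' g]))) \<longrightarrow> rl tx = x \<longrightarrow>
      (\<exists>t' \<in> attach d FF (nw (p @ [SymB s n' g]) e). rl t' = Node s t1 x \<and> tgen d t' = g)"
    proof (intro allI impI)
      fix p e tx assume a: "p \<noteq> []" "tx \<in> attach d FF (nw p (Some (hd [SymB s n' g])))" "rl tx = x"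
      have "Node ((e, s), n', g) t1' tx \<in> attach d FF (nw (p @ [SymB s n' g]) e)"
        unfolding attach_node[OF a(1)] using a(2) t1' ds by simp
      then show "\<exists>t' \<in> attach d FF (nw (p @ [SymB s n' g]) e). rl t' = Node s t1 x \<and> tgen d t' = g"
        using a(3) t1' ds by (intro bexI[of _ "Node ((e, s), n', g) t1' tx"]) simp_all
    qed
    then show "\<exists>u. genB G b g u \<and> (\<forall>p e tx. p \<noteq> [] \<longrightarrow>
      tx \<in> attach d FF (nw p (Some (hd u))) \<longrightarrow> rl tx = x \<longrightarrow>
      (\<exists>t' \<in> attach d FF (nw (p @ u) e). rl t' = Node s t1 x \<and> tgen d t' = g))"
      using gb by (intro exI[of _ "[SymB s n' g]"] conjI)
  qed
qed

end


context nsp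
begin

lemma trees: "map_btree (\<lambda>x. snd (fst x)) (\<lambda>x. snd (fst x)) ` Fcal_S d (start G) (Next (spine_lang G)) = tree_lang G"
proof (intro set_eqI iffI)
  fix t assume "t \<in> map_btree (\<lambda>x. snd (fst x)) (\<lambda>x. snd (fst x)) ` Fcal_S d (start G) (Next (spine_lang G))"
  then obtain t' where t': "t' \<in> FF" "tgen d t' = start G" "t = rl t'"
    unfolding Fcal_S_def rl_def by blast
  have "t' \<in> {t. tn G (tgen d t) (rl t)}" using Fcal_sub t'(1) by blast
  then have "tn G (start G) t" using t' by simp
  then show "t \<in> tree_lang G" unfolding tree_lang_tn by simp
next
  fix t assume "t \<in> tree_lang G"
  then have "tn G (start G) t" unfolding tree_lang_tn by simp
  from II(1)[OF this] obtain t' where t': "t' \<in> FF" "tgen d t' = start G" "rl t' = t" by blast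
  have "t' \<in> Fcal_S d (start G) (Next (spine_lang G))" unfolding Fcal_S_def using t' by simp
  then show "t \<in> map_btree (\<lambda>x. snd (fst x)) (\<lambda>x. snd (fst x)) ` Fcal_S d (start G) (Next (spine_lang G))"
    using t'(3) unfolding rl_def by blast
qed

end

theorem corollary6p7:
  fixes G :: "('n, 'a, 's) spine_grammar" and d :: "'s \<Rightarrow> nat"
  assumes "normalized_spine G d"
  shows "\<exists>A :: (nat, ('n, 'a, 's) letter, nat) mpda.
           is_mpda A \<and> pop_normalized A \<and>
           mpda_lang A \<union> {w \<in> Next (spine_lang G). length w = 1} = Next (spine_lang G) \<and>
           (\<exists>\<rho>0 \<rho>2. map_btree \<rho>0 \<rho>2 `
              Fcal_S d (start G) (mpda_lang A \<union> {w \<in> Next (spine_lang G). length w = 1})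
              = tree_lang G)"
proof -
  interpret nsp G d using assms by unfold_locales
  have u: "mpda_lang (mach G) \<union> {w \<in> Next (spine_lang G). length w = 1} = Next (spine_lang G)"
    by (rule mach_union)
  show ?thesis
    apply (rule exI[of _ "mach G"])
    apply (intro conjI mach_mpda mach_pop u)
    apply (rule exI[of _ "\<lambda>x. snd (fst x)"], rule exI[of _ "\<lambda>x. snd (fst x)"])
    unfolding u by (rule trees)
qed

end
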